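(* Let $({\cal A},* )$ be a real quantum group (a $*$-Hopf algebra with coproduct $\Delta$, antipode $S$), let $\tau=*\circ S$, and let $g:{\cal A}\rightarrow{\bf C}$ be a character, i.e. a $*$-homomorphism of ${\cal A}$ into ${\bf C}$. Define ${\rm Ad}_g\,x=\sum_{(x)}g(S(x_{(1)}))\,g(x_{(3)})\,x_{(2)}$ for $x\in{\cal A}$. Let $r:{\cal A}\rightarrow{\cal K}$ be the projection that defines a right coisotropic quantum subgroup ${\cal K}$ of ${\cal A}$, and let $r_g[x]=r[{\rm Ad}_g^{-1}\,x]$, $x\in{\cal A}$. Then ${\rm Ker}\,r_g={\rm Ad}_g\,{\rm Ker}\,r$ is a $\tau$-invariant right ideal and two-sided coideal of ${\cal A}$, and it determines a right coisotropic quantum subgroup ${\cal K}_g$. The corresponding homogeneous space $B^{r_g}=\{a\in{\cal A}\,|\,({\rm id}\otimes r_g)\Delta a=a\otimes r_g(1)\}$ equals ${\rm Ad}_g\,B^r$, where $B^r=\{a\in{\cal A}\,|\,({\rm id}\otimes r)\Delta a=a\otimes r(1)\}$, and $B^{r_g}$ is isomorphic to $B^r$ as a left comodule algebra.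
   Context: A real coisotropic quantum right subgroup $({\cal K},\tau_{\cal K})$ of a real quantum group $({\cal A},* )$ is a coalgebra and right ${\cal A}$-module ${\cal K}$ such that (i) there is a surjective linear map $r:{\cal A}\rightarrow{\cal K}$ which is a morphism of coalgebras and of right ${\cal A}$-modules (with ${\cal A}$ a module over itself via multiplication), and (ii) there is an antilinear map $\tau_{\cal K}:{\cal K}\rightarrow{\cal K}$ with $\tau_{\cal K}\circ r=r\circ\tau$, where $\tau=*\circ S$. Such subgroups correspond bijectively to $\tau$-invariant two-sided coideals that are right ideals in ${\cal A}$ (via ${\cal K}={\cal A}/{\rm Ker}\,r$). *)

theory Defs
  imports Complex_Main
begin

text \<open>Elements of an algebraic tensor product V (x) W are represented by finite lists of
  pairs (v_i, w_i), standing for the sum of the simple tensors v_i (x) w_i.  Two such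
  representatives denote the same tensor iff all products of linear functionals agree on
  them (linear functionals of the form f (x) g separate the points of V (x) W over a
  field).\<close>

definition lfunc :: "(complex \<Rightarrow> 'v::ab_group_add \<Rightarrow> 'v) \<Rightarrow> ('v \<Rightarrow> complex) \<Rightarrow> bool" where
  "lfunc sc f \<longleftrightarrow> Vector_Spaces.linear sc (*) f"

definition teq2 :: "(complex \<Rightarrow> 'v::ab_group_add \<Rightarrow> 'v) \<Rightarrow> (complex \<Rightarrow> 'w::ab_group_add \<Rightarrow> 'w)
    \<Rightarrow> ('v \<times> 'w) list \<Rightarrow> ('v \<times> 'w) list \<Rightarrow> bool" where
  "teq2 sv sw l1 l2 \<longleftrightarrow>
     (\<forall>f g. lfunc sv f \<and> lfunc sw g \<longrightarrow>
        (\<Sum>(a,b)\<leftarrow>l1. f a * g b) = (\<Sum>(a,b)\<leftarrow>l2. f a * g b))"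

definition teq3 :: "(complex \<Rightarrow> 'v::ab_group_add \<Rightarrow> 'v) \<Rightarrow> (complex \<Rightarrow> 'w::ab_group_add \<Rightarrow> 'w)
    \<Rightarrow> (complex \<Rightarrow> 'u::ab_group_add \<Rightarrow> 'u)
    \<Rightarrow> ('v \<times> 'w \<times> 'u) list \<Rightarrow> ('v \<times> 'w \<times> 'u) list \<Rightarrow> bool" where
  "teq3 sv sw su l1 l2 \<longleftrightarrow>
     (\<forall>f g h. lfunc sv f \<and> lfunc sw g \<and> lfunc su h \<longrightarrow>
        (\<Sum>(a,b,c)\<leftarrow>l1. f a * g b * h c) = (\<Sum>(a,b,c)\<leftarrow>l2. f a * g b * h c))"

definition coalgebra :: "(complex \<Rightarrow> 'c::ab_group_add \<Rightarrow> 'c) \<Rightarrow> ('c \<Rightarrow> ('c \<times> 'c) list)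
    \<Rightarrow> ('c \<Rightarrow> complex) \<Rightarrow> bool" where
  "coalgebra sc cop eps \<longleftrightarrow>
     vector_space sc \<and> lfunc sc eps \<and>
     (\<forall>x y. teq2 sc sc (cop (x + y)) (cop x @ cop y)) \<and>
     (\<forall>c x. teq2 sc sc (cop (sc c x)) (map (\<lambda>(u,v). (sc c u, v)) (cop x))) \<and>
     (\<forall>x. teq3 sc sc sc
            (concat (map (\<lambda>(u,v). map (\<lambda>(p,q). (p,q,v)) (cop u)) (cop x)))
            (concat (map (\<lambda>(u,v). map (\<lambda>(p,q). (u,p,q)) (cop v)) (cop x)))) \<and>
     (\<forall>x. (\<Sum>(u,v)\<leftarrow>cop x. sc (eps u) v) = x) \<and>
     (\<forall>x. (\<Sum>(u,v)\<leftarrow>cop x. sc (eps v) u) = x)"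

text \<open>The Hopf algebra A is the whole type 'a (a ring with unit), with complex scalar
  multiplication sc, involution st (the *-operation), coproduct cop, counit eps and
  antipode S.\<close>

definition real_quantum_group :: "(complex \<Rightarrow> 'a::ring_1 \<Rightarrow> 'a) \<Rightarrow> ('a \<Rightarrow> 'a)
    \<Rightarrow> ('a \<Rightarrow> ('a \<times> 'a) list) \<Rightarrow> ('a \<Rightarrow> complex) \<Rightarrow> ('a \<Rightarrow> 'a) \<Rightarrow> bool" where
  "real_quantum_group sc st cop eps S \<longleftrightarrow>
     coalgebra sc cop eps \<and>
     \<comment> \<open>associative unital complex algebra\<close>
     (\<forall>c x y. sc c (x * y) = sc c x * y \<and> sc c (x * y) = x * sc c y) \<and>
     \<comment> \<open>coproduct and counit are unital algebra homomorphisms\<close>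
     (\<forall>x y. teq2 sc sc (cop (x * y))
              (concat (map (\<lambda>(a,b). map (\<lambda>(c,d). (a * c, b * d)) (cop y)) (cop x)))) \<and>
     teq2 sc sc (cop 1) [(1, 1)] \<and>
     (\<forall>x y. eps (x * y) = eps x * eps y) \<and> eps 1 = 1 \<and>
     \<comment> \<open>antipode\<close>
     Vector_Spaces.linear sc sc S \<and>
     (\<forall>x. (\<Sum>(u,v)\<leftarrow>cop x. S u * v) = sc (eps x) 1) \<and>
     (\<forall>x. (\<Sum>(u,v)\<leftarrow>cop x. u * S v) = sc (eps x) 1) \<and>
     \<comment> \<open>*-structure: antilinear, antimultiplicative involution, compatible with coproduct\<close>
     (\<forall>x y. st (x + y) = st x + st y) \<and>
     (\<forall>c x. st (sc c x) = sc (cnj c) (st x)) \<and>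
     (\<forall>x y. st (x * y) = st y * st x) \<and>
     (\<forall>x. st (st x) = x) \<and>
     (\<forall>x. teq2 sc sc (cop (st x)) (map (\<lambda>(u,v). (st u, st v)) (cop x)))"

definition tau :: "('a \<Rightarrow> 'a) \<Rightarrow> ('a \<Rightarrow> 'a) \<Rightarrow> 'a \<Rightarrow> 'a" where
  "tau st S = st \<circ> S"

definition character :: "(complex \<Rightarrow> 'a::ring_1 \<Rightarrow> 'a) \<Rightarrow> ('a \<Rightarrow> 'a) \<Rightarrow> ('a \<Rightarrow> complex) \<Rightarrow> bool" where
  "character sc st g \<longleftrightarrow>
     lfunc sc g \<and> (\<forall>x y. g (x * y) = g x * g y) \<and> g 1 = 1 \<and>
     (\<forall>x. g (st x) = cnj (g x))"

text \<open>Ad_g x = sum g(S x_(1)) g(x_(3)) x_(2), with (Delta (x) id) Delta x used for the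
  iterated coproduct.\<close>
definition Ad :: "(complex \<Rightarrow> 'a::ring_1 \<Rightarrow> 'a) \<Rightarrow> ('a \<Rightarrow> ('a \<times> 'a) list) \<Rightarrow> ('a \<Rightarrow> 'a)
    \<Rightarrow> ('a \<Rightarrow> complex) \<Rightarrow> 'a \<Rightarrow> 'a" where
  "Ad sc cop S g x = (\<Sum>(u,v)\<leftarrow>cop x. \<Sum>(p,q)\<leftarrow>cop u. sc (g (S p) * g v) q)"

definition real_coisotropic_right_qsubgroup ::
  "(complex \<Rightarrow> 'a::ring_1 \<Rightarrow> 'a) \<Rightarrow> ('a \<Rightarrow> 'a) \<Rightarrow> ('a \<Rightarrow> ('a \<times> 'a) list) \<Rightarrow> ('a \<Rightarrow> complex)
   \<Rightarrow> ('a \<Rightarrow> 'a)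
   \<Rightarrow> (complex \<Rightarrow> 'k::ab_group_add \<Rightarrow> 'k) \<Rightarrow> ('k \<Rightarrow> ('k \<times> 'k) list) \<Rightarrow> ('k \<Rightarrow> complex)
   \<Rightarrow> ('k \<Rightarrow> 'a \<Rightarrow> 'k) \<Rightarrow> ('k \<Rightarrow> 'k) \<Rightarrow> ('a \<Rightarrow> 'k) \<Rightarrow> bool" where
  "real_coisotropic_right_qsubgroup sc st cop eps S scK copK epsK act tauK r \<longleftrightarrow>
     coalgebra scK copK epsK \<and>
     \<comment> \<open>K is a right A-module\<close>
     (\<forall>a. Vector_Spaces.linear scK scK (\<lambda>k. act k a)) \<and>
     (\<forall>k. Vector_Spaces.linear sc scK (act k)) \<and>
     (\<forall>k. act k 1 = k) \<and> (\<forall>k a b. act (act k a) b = act k (a * b)) \<and>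
     \<comment> \<open>r: surjective linear map, morphism of coalgebras and right A-modules\<close>
     Vector_Spaces.linear sc scK r \<and> surj r \<and>
     (\<forall>x. teq2 scK scK (copK (r x)) (map (\<lambda>(u,v). (r u, r v)) (cop x))) \<and>
     (\<forall>x. epsK (r x) = eps x) \<and>
     (\<forall>x y. r (x * y) = act (r x) y) \<and>
     \<comment> \<open>tau_K antilinear with tau_K o r = r o tau\<close>
     (\<forall>k l. tauK (k + l) = tauK k + tauK l) \<and>
     (\<forall>c k. tauK (scK c k) = scK (cnj c) (tauK k)) \<and>
     (\<forall>x. tauK (r x) = r (tau st S x))"

definition cspace :: "(complex \<Rightarrow> 'v::ab_group_add \<Rightarrow> 'v) \<Rightarrow> 'v set \<Rightarrow> bool" where
  "cspace sc I \<longleftrightarrow> 0 \<in> I \<and> (\<forall>x\<in>I. \<forall>y\<in>I. x + y \<in> I) \<and> (\<forall>c. \<forall>x\<in>I. sc c x \<in> I)"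

definition right_ideal :: "(complex \<Rightarrow> 'a::ring_1 \<Rightarrow> 'a) \<Rightarrow> 'a set \<Rightarrow> bool" where
  "right_ideal sc I \<longleftrightarrow> cspace sc I \<and> (\<forall>x\<in>I. \<forall>y. x * y \<in> I)"

text \<open>Two-sided coideal: a subspace I with eps(I) = 0 and Delta(I) contained in
  I (x) A + A (x) I.\<close>
definition two_sided_coideal :: "(complex \<Rightarrow> 'a::ab_group_add \<Rightarrow> 'a) \<Rightarrow> ('a \<Rightarrow> ('a \<times> 'a) list)
    \<Rightarrow> ('a \<Rightarrow> complex) \<Rightarrow> 'a set \<Rightarrow> bool" where
  "two_sided_coideal sc cop eps I \<longleftrightarrow> cspace sc I \<and> (\<forall>x\<in>I. eps x = 0) \<and>
     (\<forall>x\<in>I. \<exists>l. teq2 sc sc (cop x) l \<and> (\<forall>(u,v)\<in>set l. u \<in> I \<or> v \<in> I))"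

definition ker :: "('a \<Rightarrow> 'k::zero) \<Rightarrow> 'a set" where
  "ker r = {x. r x = 0}"

definition hom_space :: "(complex \<Rightarrow> 'a::ring_1 \<Rightarrow> 'a) \<Rightarrow> ('a \<Rightarrow> ('a \<times> 'a) list)
    \<Rightarrow> (complex \<Rightarrow> 'k::ab_group_add \<Rightarrow> 'k) \<Rightarrow> ('a \<Rightarrow> 'k) \<Rightarrow> 'a set" where
  "hom_space sc cop scK r = {a. teq2 sc scK (map (\<lambda>(u,v). (u, r v)) (cop a)) [(a, r 1)]}"

text \<open>Isomorphism of left A-comodule algebras B -> B' (B, B' unital subalgebras of A
  with left coaction the restriction of Delta): a bijection which is a unital algebra
  homomorphism and intertwines the coactions, Delta(phi b) = (id (x) phi) Delta b.\<close>
definition left_comod_alg_iso :: "(complex \<Rightarrow> 'a::ring_1 \<Rightarrow> 'a) \<Rightarrow> ('a \<Rightarrow> ('a \<times> 'a) list)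
    \<Rightarrow> 'a set \<Rightarrow> 'a set \<Rightarrow> ('a \<Rightarrow> 'a) \<Rightarrow> bool" where
  "left_comod_alg_iso sc cop B B' phi \<longleftrightarrow>
     bij_betw phi B B' \<and>
     (\<forall>x\<in>B. \<forall>y\<in>B. phi (x + y) = phi x + phi y \<and> phi (x * y) = phi x * phi y) \<and>
     (\<forall>c. \<forall>x\<in>B. phi (sc c x) = sc c (phi x)) \<and> phi 1 = 1 \<and>
     (\<forall>b\<in>B. \<exists>l. teq2 sc sc (cop b) l \<and> (\<forall>(u,v)\<in>set l. v \<in> B) \<and>
              teq2 sc sc (cop (phi b)) (map (\<lambda>(u,v). (u, phi v)) l))"

end

theory Submission
  imports Defs
begin

lemma vs_cplx: "vector_space ((*) :: complex \<Rightarrow> complex \<Rightarrow> complex)"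
  by unfold_locales (auto simp: algebra_simps)

lemma lin_add: "Vector_Spaces.linear s1 s2 f \<Longrightarrow> f (x + y) = f x + f y"
  by (simp add: Vector_Spaces.linear_iff)
lemma lin_scale: "Vector_Spaces.linear s1 s2 f \<Longrightarrow> f (s1 c x) = s2 c (f x)"
  by (simp add: Vector_Spaces.linear_iff)
lemma lin_0: "Vector_Spaces.linear s1 s2 f \<Longrightarrow> f 0 = 0"
  using lin_add[of s1 s2 f 0 0] by simp
lemma lin_neg: "Vector_Spaces.linear s1 s2 f \<Longrightarrow> f (- x) = - f x"
  using lin_add[of s1 s2 f x "-x"] lin_0[of s1 s2 f] by (simp add: add_eq_0_iff2)
lemma lin_diff: "Vector_Spaces.linear s1 s2 f \<Longrightarrow> f (x - y) = f x - f y"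
  using lin_add[of s1 s2 f x "-y"] lin_neg[of s1 s2 f y] by simp
lemma lin_sum_list: "Vector_Spaces.linear s1 s2 f \<Longrightarrow> f (sum_list (map h xs)) = sum_list (map (\<lambda>x. f (h x)) xs)"
  by (induction xs) (auto simp: lin_0 lin_add)
lemma lin_sum: "Vector_Spaces.linear s1 s2 f \<Longrightarrow> f (sum h A) = sum (\<lambda>x. f (h x)) A"
  by (induction A rule: infinite_finite_induct) (auto simp: lin_0 lin_add)
lemma lin_vs1: "Vector_Spaces.linear s1 s2 f \<Longrightarrow> vector_space s1"
  by (simp add: Vector_Spaces.linear_iff)
lemma lin_vs2: "Vector_Spaces.linear s1 s2 f \<Longrightarrow> vector_space s2"
  by (simp add: Vector_Spaces.linear_iff)
lemma linI: "vector_space s1 \<Longrightarrow> vector_space s2 \<Longrightarrow> (\<And>x y. f (x + y) = f x + f y) \<Longrightarrow> (\<And>c x. f (s1 c x) = s2 c (f x))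
   \<Longrightarrow> Vector_Spaces.linear s1 s2 f"
  by (simp add: Vector_Spaces.linear_iff)
lemma lincomp0: "Vector_Spaces.linear s1 s2 f \<Longrightarrow> Vector_Spaces.linear s2 s3 g \<Longrightarrow> Vector_Spaces.linear s1 s3 (\<lambda>x. g (f x))"
  by (simp add: Vector_Spaces.linear_iff)

lemma lin_mult_right: "Vector_Spaces.linear s (*) f \<Longrightarrow> Vector_Spaces.linear s (*) (\<lambda>a. f a * (c::complex))"
  by (rule linI) (auto simp: lin_vs1 vs_cplx lin_add lin_scale algebra_simps)
lemma lin_mult_left: "Vector_Spaces.linear s (*) f \<Longrightarrow> Vector_Spaces.linear s (*) (\<lambda>a. (c::complex) * f a)"
  by (rule linI) (auto simp: lin_vs1 vs_cplx lin_add lin_scale algebra_simps)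

lemma vs_sum_list_scale: assumes "vector_space s" shows "s c (sum_list (map h xs)) = sum_list (map (\<lambda>x. s c (h x)) xs)"
proof -
  interpret vector_space s by fact
  show ?thesis by (induction xs) (auto simp: scale_right_distrib)
qed

lemma sep_point:
  assumes vs: "vector_space s" and x: "x \<noteq> 0"
  shows "\<exists>f. lfunc s f \<and> f x \<noteq> 0"
proof -
  interpret vector_space_pair s "(*) :: complex \<Rightarrow> complex \<Rightarrow> complex"
    using vs vs_cplx by (simp add: vector_space_pair_def)
  have "vs1.independent {x}" using x by simp
  from linear_independent_extend[OF this, of "\<lambda>_. 1"] obtain f where
    "Vector_Spaces.linear s (*) f" "\<forall>y\<in>{x}. f y = 1" by blast
  then show ?thesis unfolding lfunc_def by (intro exI[of _ f]) auto
qed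

lemma sep_eq:
  assumes vs: "vector_space s" and h: "\<And>f. lfunc s f \<Longrightarrow> f x = f y"
  shows "x = y"
proof (rule ccontr)
  assume "x \<noteq> y"
  then have "x - y \<noteq> 0" by simp
  from sep_point[OF vs this] obtain f where f: "lfunc s f" "f (x - y) \<noteq> 0" by blast
  have "f (x - y) = f x - f y" using f(1) unfolding lfunc_def by (rule lin_diff)
  with h[OF f(1)] f(2) show False by simp
qed

locale cvs = vector_space scale for scale :: "complex \<Rightarrow> 'b::ab_group_add \<Rightarrow> 'b"
begin

lemma coords:
  assumes fin: "finite X" and B1: "independent B1" "B1 \<subseteq> span X"
  obtains B c where "finite B" "B1 \<subseteq> B" "independent B" "B \<subseteq> span X" "X \<subseteq> span B"
     "\<forall>x\<in>X. x = (\<Sum>e\<in>B. scale (c x e) e)"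
     "\<forall>e\<in>B. \<exists>f. lfunc scale f \<and> (\<forall>x\<in>X. f x = c x e)"
proof -
  obtain B where B: "B1 \<subseteq> B" "B \<subseteq> span X" "independent B" "span X \<subseteq> span B"
    using maximal_independent_subset_extend[OF B1(2) B1(1)] by blast
  have finB: "finite B" using independent_span_bound[OF fin B(3) B(2)] by simp
  have XB: "X \<subseteq> span B" using B(4) span_superset by blast
  have "\<forall>x\<in>X. \<exists>u. x = (\<Sum>e\<in>B. scale (u e) e)"
    using XB span_finite[OF finB] by blast
  then obtain c where c: "\<forall>x\<in>X. x = (\<Sum>e\<in>B. scale (c x e) e)" by metis
  interpret vp: vector_space_pair scale "(*) :: complex \<Rightarrow> complex \<Rightarrow> complex"
    using vs_cplx by (simp add: vector_space_pair_def vector_space_axioms)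
  have ex: "\<forall>e\<in>B. \<exists>f. lfunc scale f \<and> (\<forall>x\<in>X. f x = c x e)"
  proof
   fix e assume e: "e \<in> B"
   show "\<exists>f. lfunc scale f \<and> (\<forall>x\<in>X. f x = c x e)"
  proof -
    obtain f where f: "Vector_Spaces.linear scale (*) f" "\<forall>y\<in>B. f y = (if y = e then 1 else 0)"
      using vp.linear_independent_extend[OF B(3), of "\<lambda>y. if y = e then 1 else 0"] by blast
    have "f x = c x e" if x: "x \<in> X" for x
    proof -
      have "f x = f (\<Sum>e\<in>B. scale (c x e) e)" using c x by metis
      also have "\<dots> = (\<Sum>e'\<in>B. c x e' * f e')" using f(1) by (simp add: lin_sum lin_scale)
      also have "\<dots> = (\<Sum>e'\<in>B. if e' = e then c x e' else 0)" using f(2) by (intro sum.cong) auto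
      also have "\<dots> = c x e" using e finB by simp
      finally show ?thesis .
    qed
    then show ?thesis using f(1) unfolding lfunc_def by blast
  qed
  qed
  show ?thesis by (rule that[OF finB B(1) B(3) B(2) XB c ex])
qed

lemma expand:
  assumes vsw: "vector_space sw" and vsu: "vector_space su"
    and c: "\<forall>x\<in>fst ` set l. x = (\<Sum>e\<in>B. scale (c x e) e)"
    and l1: "\<And>b. Vector_Spaces.linear scale su (\<lambda>a. \<Psi> a b)"
    and l2: "\<And>a. Vector_Spaces.linear sw su (\<Psi> a)"
  shows "(\<Sum>(a,b)\<leftarrow>l. \<Psi> a b) = (\<Sum>e\<in>B. \<Psi> e (\<Sum>(a,b)\<leftarrow>l. sw (c a e) b))"
  using c
proof (induction l)
  case Nil
  then show ?case by (simp add: lin_0[OF l2])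
next
  case (Cons p l)
  obtain a b where p: "p = (a, b)" by force
  have a: "a = (\<Sum>e\<in>B. scale (c a e) e)" using Cons.prems p by auto
  have "\<Psi> a b = (\<Sum>e\<in>B. su (c a e) (\<Psi> e b))"
    by (subst a) (simp add: lin_sum[OF l1] lin_scale[OF l1])
  also have "\<dots> = (\<Sum>e\<in>B. \<Psi> e (sw (c a e) b))" by (simp add: lin_scale[OF l2])
  finally have 1: "\<Psi> a b = (\<Sum>e\<in>B. \<Psi> e (sw (c a e) b))" .
  have IH: "(\<Sum>(a,b)\<leftarrow>l. \<Psi> a b) = (\<Sum>e\<in>B. \<Psi> e (\<Sum>(a,b)\<leftarrow>l. sw (c a e) b))"
    using Cons by auto
  show ?case unfolding p using 1 IH by (simp add: lin_add[OF l2] sum.distrib)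
qed

end


lemma sl_cong: "(\<And>x. x \<in> set l \<Longrightarrow> F x = G x) \<Longrightarrow> sum_list (map F l) = sum_list (map G l)"
  by (metis map_eq_conv)

lemma teq2D: "teq2 sv sw l1 l2 \<Longrightarrow> lfunc sv f \<Longrightarrow> lfunc sw g \<Longrightarrow>
   (\<Sum>(a,b)\<leftarrow>l1. f a * g b) = (\<Sum>(a,b)\<leftarrow>l2. f a * g b)"
  unfolding teq2_def by blast

lemma teq3D: "teq3 sv sw su l1 l2 \<Longrightarrow> lfunc sv f \<Longrightarrow> lfunc sw g \<Longrightarrow> lfunc su h \<Longrightarrow>
   (\<Sum>(a,b,c)\<leftarrow>l1. f a * g b * h c) = (\<Sum>(a,b,c)\<leftarrow>l2. f a * g b * h c)"
  unfolding teq3_def by blast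

lemma cvsI: "vector_space s \<Longrightarrow> cvs s"
  by (simp add: cvs_def)

lemma coords0:
  assumes "vector_space sv" "finite X"
  obtains B c where "finite B"
     "\<forall>x\<in>X. x = (\<Sum>e\<in>B. sv (c x e) e)"
     "\<forall>e\<in>B. \<exists>f. lfunc sv f \<and> (\<forall>x\<in>X. f x = c x e)"
proof -
  interpret V: cvs sv using assms(1) by (rule cvsI)
  obtain B c where B: "finite B" "{} \<subseteq> B" "V.independent B" "B \<subseteq> V.span X" "X \<subseteq> V.span B"
     "\<forall>x\<in>X. x = (\<Sum>e\<in>B. sv (c x e) e)"
     "\<forall>e\<in>B. \<exists>f. lfunc sv f \<and> (\<forall>x\<in>X. f x = c x e)"
    by (rule V.coords[OF assms(2) V.independent_empty empty_subsetI])
  show ?thesis by (rule that[OF B(1) B(6) B(7)])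
qed

lemma teq2_bil:
  assumes vsv: "vector_space sv" and vsw: "vector_space sw" and vsu: "vector_space su"
    and t: "teq2 sv sw l1 l2"
    and l1: "\<And>b. Vector_Spaces.linear sv su (\<lambda>a. \<Phi> a b)" and l2: "\<And>a. Vector_Spaces.linear sw su (\<Phi> a)"
  shows "(\<Sum>(a,b)\<leftarrow>l1. \<Phi> a b) = (\<Sum>(a,b)\<leftarrow>l2. \<Phi> a b)"
proof -
  interpret V: cvs sv using vsv by (rule cvsI)
  let ?X = "fst ` set (l1 @ l2)"
  obtain B c where B: "finite B" "\<forall>x\<in>?X. x = (\<Sum>e\<in>B. sv (c x e) e)"
     "\<forall>e\<in>B. \<exists>f. lfunc sv f \<and> (\<forall>x\<in>?X. f x = c x e)"
    by (rule coords0[OF vsv, of ?X]) auto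
  have w: "(\<Sum>(a,b)\<leftarrow>l1. sw (c a e) b) = (\<Sum>(a,b)\<leftarrow>l2. sw (c a e) b)" if e: "e \<in> B" for e
  proof -
    obtain f where f0: "lfunc sv f" "\<forall>x\<in>?X. f x = c x e" using B(3) e by blast
    have f: "lfunc sv f" "\<And>a b. (a,b) \<in> set l1 \<Longrightarrow> f a = c a e" "\<And>a b. (a,b) \<in> set l2 \<Longrightarrow> f a = c a e"
    proof -
      fix a b assume "(a,b) \<in> set l1"
      then have "a \<in> ?X" by force
      then show "f a = c a e" using f0 by blast
    next
      fix a b assume "(a,b) \<in> set l2"
      then have "a \<in> ?X" by force
      then show "f a = c a e" using f0 by blast
    qed (use f0 in simp)
    show ?thesis
    proof (rule sep_eq[OF vsw])
      fix h assume h: "lfunc sw h"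
      have hl: "Vector_Spaces.linear sw (*) h" using h by (simp add: lfunc_def)
      have "h (\<Sum>(a,b)\<leftarrow>l1. sw (c a e) b) = (\<Sum>(a,b)\<leftarrow>l1. f a * h b)"
        by (subst lin_sum_list[OF hl], rule sl_cong) (auto simp: lin_scale[OF hl] f(2,3))
      also have "\<dots> = (\<Sum>(a,b)\<leftarrow>l2. f a * h b)" using teq2D[OF t f(1) h] .
      also have "\<dots> = h (\<Sum>(a,b)\<leftarrow>l2. sw (c a e) b)"
        by (subst lin_sum_list[OF hl], rule sl_cong) (auto simp: lin_scale[OF hl] f(2,3))
      finally show "h (\<Sum>(a,b)\<leftarrow>l1. sw (c a e) b) = h (\<Sum>(a,b)\<leftarrow>l2. sw (c a e) b)" .
    qed
  qed
  have "(\<Sum>(a,b)\<leftarrow>l1. \<Phi> a b) = (\<Sum>e\<in>B. \<Phi> e (\<Sum>(a,b)\<leftarrow>l1. sw (c a e) b))"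
    by (rule V.expand[OF vsw vsu _ l1 l2]) (use B(2) in auto)
  also have "\<dots> = (\<Sum>e\<in>B. \<Phi> e (\<Sum>(a,b)\<leftarrow>l2. sw (c a e) b))" using w by simp
  also have "\<dots> = (\<Sum>(a,b)\<leftarrow>l2. \<Phi> a b)"
    by (rule V.expand[OF vsw vsu _ l1 l2, symmetric]) (use B(2) in auto)
  finally show ?thesis .
qed

lemma expand3:
  assumes vsv: "vector_space sv" and vsw: "vector_space sw"
    and c: "\<forall>x\<in>fst ` set l. x = (\<Sum>e\<in>B. sv (c x e) e)"
    and l1: "\<And>b d. lfunc sv (\<lambda>a. T a b d)" and l2: "\<And>a d. lfunc sw (\<lambda>b. T a b d)"
  shows "(\<Sum>(a,b,d)\<leftarrow>l. T a b d) = (\<Sum>e\<in>B. \<Sum>(b,d)\<leftarrow>map (\<lambda>(a,b,d). (sw (c a e) b, d)) l. T e b d)"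
  using c
proof (induction l)
  case Nil
  then show ?case by simp
next
  case (Cons p l)
  obtain a b d where p: "p = (a, b, d)" by (cases p) force
  have a: "a = (\<Sum>e\<in>B. sv (c a e) e)" using Cons.prems p by auto
  have la: "Vector_Spaces.linear sv (*) (\<lambda>a. T a b d)" using l1 by (simp add: lfunc_def)
  have lb: "\<And>e. Vector_Spaces.linear sw (*) (\<lambda>b. T e b d)" using l2 by (simp add: lfunc_def)
  have "T a b d = (\<Sum>e\<in>B. c a e * T e b d)"
    by (subst a) (simp add: lin_sum[OF la] lin_scale[OF la])
  also have "\<dots> = (\<Sum>e\<in>B. T e (sw (c a e) b) d)" by (simp add: lin_scale[OF lb])
  finally have 1: "T a b d = (\<Sum>e\<in>B. T e (sw (c a e) b) d)" .
  have IH: "(\<Sum>(a,b,d)\<leftarrow>l. T a b d) = (\<Sum>e\<in>B. \<Sum>(b,d)\<leftarrow>map (\<lambda>(a,b,d). (sw (c a e) b, d)) l. T e b d)"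
    using Cons by auto
  show ?case unfolding p using 1 IH by (simp add: sum.distrib)
qed

lemma teq3_tril:
  assumes vsv: "vector_space sv" and vsw: "vector_space sw" and vsu: "vector_space su"
    and t: "teq3 sv sw su l1 l2"
    and l1: "\<And>b d. lfunc sv (\<lambda>a. T a b d)" and l2: "\<And>a d. lfunc sw (\<lambda>b. T a b d)"
    and l3: "\<And>a b. lfunc su (\<lambda>d. T a b d)"
  shows "(\<Sum>(a,b,d)\<leftarrow>l1. T a b d) = (\<Sum>(a,b,d)\<leftarrow>l2. T a b d)"
proof -
  let ?X = "fst ` set (l1 @ l2)"
  obtain B c where B: "finite B" "\<forall>x\<in>?X. x = (\<Sum>e\<in>B. sv (c x e) e)"
     "\<forall>e\<in>B. \<exists>f. lfunc sv f \<and> (\<forall>x\<in>?X. f x = c x e)"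
    by (rule coords0[OF vsv, of ?X]) auto
  have w: "(\<Sum>(b,d)\<leftarrow>map (\<lambda>(a,b,d). (sw (c a e) b, d)) l1. T e b d) =
           (\<Sum>(b,d)\<leftarrow>map (\<lambda>(a,b,d). (sw (c a e) b, d)) l2. T e b d)" if e: "e \<in> B" for e
  proof (rule teq2_bil[OF vsw vsu vs_cplx])
    obtain f where f0: "lfunc sv f" "\<forall>x\<in>?X. f x = c x e" using B(3) e by blast
    have f: "lfunc sv f" "\<And>a b d. (a,b,d) \<in> set l1 \<Longrightarrow> f a = c a e" "\<And>a b d. (a,b,d) \<in> set l2 \<Longrightarrow> f a = c a e"
    proof -
      fix a b d assume "(a,b,d) \<in> set l1"
      then have "a \<in> ?X" by force
      then show "f a = c a e" using f0 by blast
    next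
      fix a b d assume "(a,b,d) \<in> set l2"
      then have "a \<in> ?X" by force
      then show "f a = c a e" using f0 by blast
    qed (use f0 in simp)
    show "teq2 sw su (map (\<lambda>(a,b,d). (sw (c a e) b, d)) l1) (map (\<lambda>(a,b,d). (sw (c a e) b, d)) l2)"
      unfolding teq2_def
    proof (intro allI impI)
      fix g h assume gh: "lfunc sw g \<and> lfunc su h"
      have gl: "Vector_Spaces.linear sw (*) g" using gh by (simp add: lfunc_def)
      have "(\<Sum>(b,d)\<leftarrow>map (\<lambda>(a,b,d). (sw (c a e) b, d)) l1. g b * h d) = (\<Sum>(a,b,d)\<leftarrow>l1. f a * g b * h d)"
        by (simp add: o_def case_prod_beta, rule sl_cong) (auto simp: lin_scale[OF gl] f(2,3))
      also have "\<dots> = (\<Sum>(a,b,d)\<leftarrow>l2. f a * g b * h d)" using teq3D[OF t f(1)] gh by blast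
      also have "\<dots> = (\<Sum>(b,d)\<leftarrow>map (\<lambda>(a,b,d). (sw (c a e) b, d)) l2. g b * h d)"
        by (simp add: o_def case_prod_beta, rule sl_cong) (auto simp: lin_scale[OF gl] f(2,3))
      finally show "(\<Sum>(b,d)\<leftarrow>map (\<lambda>(a,b,d). (sw (c a e) b, d)) l1. g b * h d) =
         (\<Sum>(b,d)\<leftarrow>map (\<lambda>(a,b,d). (sw (c a e) b, d)) l2. g b * h d)" .
    qed
  qed (use l2 l3 in \<open>auto simp: lfunc_def\<close>)
  have "(\<Sum>(a,b,d)\<leftarrow>l1. T a b d) = (\<Sum>e\<in>B. \<Sum>(b,d)\<leftarrow>map (\<lambda>(a,b,d). (sw (c a e) b, d)) l1. T e b d)"
    by (rule expand3[OF vsv vsw _ l1 l2]) (use B(2) in auto)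
  also have "\<dots> = (\<Sum>e\<in>B. \<Sum>(b,d)\<leftarrow>map (\<lambda>(a,b,d). (sw (c a e) b, d)) l2. T e b d)" using w by simp
  also have "\<dots> = (\<Sum>(a,b,d)\<leftarrow>l2. T a b d)"
    by (rule expand3[OF vsv vsw _ l1 l2, symmetric]) (use B(2) in auto)
  finally show ?thesis .
qed


lemma teq2_expand:
  assumes vsv: "vector_space sv" and vsw: "vector_space sw"
    and c: "\<forall>x\<in>fst ` set l. x = (\<Sum>e\<in>B. sv (c x e) e)" and fin: "finite B"
  shows "\<exists>Bl. set Bl = B \<and> distinct Bl \<and> teq2 sv sw l (map (\<lambda>e. (e, \<Sum>(a,b)\<leftarrow>l. sw (c a e) b)) Bl)"
proof -
  interpret V: cvs sv using vsv by (rule cvsI)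
  obtain Bl where Bl: "set Bl = B" "distinct Bl" using finite_distinct_list[OF fin] by blast
  have "teq2 sv sw l (map (\<lambda>e. (e, \<Sum>(a,b)\<leftarrow>l. sw (c a e) b)) Bl)"
    unfolding teq2_def
  proof (intro allI impI)
    fix f g assume fg: "lfunc sv f \<and> lfunc sw g"
    have "(\<Sum>(a,b)\<leftarrow>l. f a * g b) = (\<Sum>e\<in>B. f e * g (\<Sum>(a,b)\<leftarrow>l. sw (c a e) b))"
      by (rule V.expand[OF vsw vs_cplx c]) (use fg in \<open>auto simp: lfunc_def intro: lin_mult_left lin_mult_right\<close>)
    also have "\<dots> = (\<Sum>(a,b)\<leftarrow>map (\<lambda>e. (e, \<Sum>(a,b)\<leftarrow>l. sw (c a e) b)) Bl. f a * g b)"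
      using Bl by (simp add: o_def sum_list_distinct_conv_sum_set)
    finally show "(\<Sum>(a,b)\<leftarrow>l. f a * g b) = (\<Sum>(a,b)\<leftarrow>map (\<lambda>e. (e, \<Sum>(a,b)\<leftarrow>l. sw (c a e) b)) Bl. f a * g b)" .
  qed
  then show ?thesis using Bl by blast
qed


lemma teq2_ker1:
  assumes vsv: "vector_space sv" and vsw: "vector_space sw"
    and z: "\<And>f \<tau>. lfunc sv f \<Longrightarrow> \<tau> \<in> Ts \<Longrightarrow> (\<Sum>(a,b)\<leftarrow>l. f a * \<tau> b) = 0"
    and Ts: "\<And>\<tau>. \<tau> \<in> Ts \<Longrightarrow> lfunc sw \<tau>"
  shows "\<exists>l'. teq2 sv sw l l' \<and> (\<forall>(a,b)\<in>set l'. \<forall>\<tau>\<in>Ts. \<tau> b = 0)"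
proof -
  let ?X = "fst ` set l"
  obtain B c where B: "finite B" "\<forall>x\<in>?X. x = (\<Sum>e\<in>B. sv (c x e) e)"
     "\<forall>e\<in>B. \<exists>f. lfunc sv f \<and> (\<forall>x\<in>?X. f x = c x e)"
    by (rule coords0[OF vsv, of ?X]) auto
  obtain Bl where Bl: "set Bl = B" "teq2 sv sw l (map (\<lambda>e. (e, \<Sum>(a,b)\<leftarrow>l. sw (c a e) b)) Bl)"
    using teq2_expand[OF vsv vsw B(2) B(1)] by blast
  have "\<tau> (\<Sum>(a,b)\<leftarrow>l. sw (c a e) b) = 0" if e: "e \<in> B" and t: "\<tau> \<in> Ts" for e \<tau>
  proof -
    obtain f where f0: "lfunc sv f" "\<forall>x\<in>?X. f x = c x e" using B(3) e by blast
    have f: "\<And>a b. (a,b) \<in> set l \<Longrightarrow> f a = c a e"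
    proof -
      fix a b assume "(a,b) \<in> set l"
      then have "a \<in> ?X" by force
      then show "f a = c a e" using f0 by blast
    qed
    have tl: "Vector_Spaces.linear sw (*) \<tau>" using Ts[OF t] by (simp add: lfunc_def)
    have "\<tau> (\<Sum>(a,b)\<leftarrow>l. sw (c a e) b) = (\<Sum>(a,b)\<leftarrow>l. f a * \<tau> b)"
      by (subst lin_sum_list[OF tl], rule sl_cong) (auto simp: lin_scale[OF tl] f)
    also have "\<dots> = 0" using z[OF f0(1) t] .
    finally show ?thesis .
  qed
  then show ?thesis using Bl by (intro exI[of _ "map (\<lambda>e. (e, \<Sum>(a,b)\<leftarrow>l. sw (c a e) b)) Bl"]) auto
qed

lemma (in cvs) disj_span:
  assumes B: "finite B" "independent B" "B1 \<subseteq> B" and x: "x \<in> span B1" "x \<in> span (B - B1)"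
  shows "x = 0"
proof -
  have f1: "finite B1" "finite (B - B1)" using B finite_subset by auto
  obtain u1 where u1: "x = (\<Sum>v\<in>B1. scale (u1 v) v)" using x(1) span_finite[OF f1(1)] by blast
  obtain u2 where u2: "x = (\<Sum>v\<in>B - B1. scale (u2 v) v)" using x(2) span_finite[OF f1(2)] by blast
  define u where "u v = (if v \<in> B1 then u1 v else - u2 v)" for v
  have "(\<Sum>v\<in>B. scale (u v) v) = (\<Sum>v\<in>B1. scale (u v) v) + (\<Sum>v\<in>B - B1. scale (u v) v)"
    using sum.subset_diff[OF B(3) B(1)] by (simp add: add.commute)
  also have "(\<Sum>v\<in>B1. scale (u v) v) = x" unfolding u1 by (rule sum.cong) (auto simp: u_def)
  also have "(\<Sum>v\<in>B - B1. scale (u v) v) = (\<Sum>v\<in>B - B1. - scale (u2 v) v)"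
    by (rule sum.cong) (auto simp: u_def scale_minus_left)
  also have "\<dots> = - x" unfolding u2 by (simp add: sum_negf)
  finally have "(\<Sum>v\<in>B. scale (u v) v) = 0" by simp
  then have "\<forall>v\<in>B. u v = 0" using independentD[OF B(2) B(1) subset_refl] by blast
  then have "\<forall>v\<in>B1. u1 v = 0" using B(3) unfolding u_def by (metis subsetD)
  then show ?thesis using u1 by simp
qed

lemma teq2_ker2:
  assumes vsv: "vector_space sv" and vsk: "vector_space sk" and rl: "Vector_Spaces.linear sv sk r"
    and z: "teq2 sk sk (map (\<lambda>(u,v). (r u, r v)) l) []"
  shows "\<exists>l'. teq2 sv sv l l' \<and> (\<forall>(a,b)\<in>set l'. r a = 0 \<or> r b = 0)"
proof -
  interpret V: cvs sv using vsv by (rule cvsI)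
  interpret K: cvs sk using vsk by (rule cvsI)
  interpret R: Vector_Spaces.linear sv sk r by fact
  interpret VK: vector_space_pair sk "(*) :: complex \<Rightarrow> complex \<Rightarrow> complex"
    using vsk vs_cplx by (simp add: vector_space_pair_def)
  let ?X = "fst ` set l"
  let ?N = "V.span ?X \<inter> {x. r x = 0}"
  obtain B1 where B1: "B1 \<subseteq> ?N" "V.independent B1" "?N \<subseteq> V.span B1"
    by (rule V.maximal_independent_subset)
  have B1X: "B1 \<subseteq> V.span ?X" by (rule subset_trans[OF B1(1) Int_lower1])
  have finX: "finite ?X" by simp
  obtain B c where B: "finite B" "B1 \<subseteq> B" "V.independent B" "B \<subseteq> V.span ?X" "?X \<subseteq> V.span B"
     "\<forall>x\<in>?X. x = (\<Sum>e\<in>B. sv (c x e) e)"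
     "\<forall>e\<in>B. \<exists>f. lfunc sv f \<and> (\<forall>x\<in>?X. f x = c x e)"
    by (rule V.coords[OF finX B1(2) B1X])
  define w where "w e = (\<Sum>(a,b)\<leftarrow>l. sv (c a e) b)" for e
  have "\<exists>Bl. set Bl = B \<and> distinct Bl \<and> teq2 sv sv l (map (\<lambda>e. (e, w e)) Bl)"
    unfolding w_def by (rule teq2_expand[OF vsv vsv B(6) B(1)])
  then obtain Bl where Bl: "set Bl = B" "distinct Bl" "teq2 sv sv l (map (\<lambda>e. (e, w e)) Bl)"
    by blast
  have key: "r (w e0) = 0" if e0: "e0 \<in> B" "e0 \<notin> B1" for e0
  proof -
    have sub: "V.span (B - B1) \<subseteq> V.span ?X"
      using V.span_mono[of "B - B1" B] V.span_minimal[OF B(4) V.subspace_span] by blast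
    have inj: "inj_on r (V.span (B - B1))"
      unfolding R.inj_on_iff_eq_0[OF V.subspace_span]
    proof (intro ballI impI)
      fix x assume x: "x \<in> V.span (B - B1)" "r x = 0"
      then have "x \<in> V.span B1" using sub B1(3) by blast
      then show "x = 0" using V.disj_span[OF B(1) B(3) B(2) _ x(1)] by blast
    qed
    have ind: "K.independent (r ` (B - B1))"
      by (rule R.independent_injective_image[OF _ inj]) (use B(3) V.independent_mono in blast)
    obtain \<phi> where \<phi>: "Vector_Spaces.linear sk (*) \<phi>" "\<forall>y\<in>r ` (B - B1). \<phi> y = (if y = r e0 then 1 else 0)"
      using VK.linear_independent_extend[OF ind, of "\<lambda>y. if y = r e0 then 1 else 0"] by blast
    have injB: "inj_on r (B - B1)" using inj_on_subset[OF inj V.span_superset] .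
    have \<phi>e: "\<phi> (r e) = (if e = e0 then 1 else 0)" if e: "e \<in> B" for e
    proof (cases "e \<in> B1")
      case True
      then have "r e = 0" using B1(1) by blast
      then show ?thesis using True e0 lin_0[OF \<phi>(1)] by auto
    next
      case False
      then have "\<phi> (r e) = (if r e = r e0 then 1 else 0)" using \<phi>(2) e by blast
      also have "(r e = r e0) = (e = e0)" using inj_on_eq_iff[OF injB, of e e0] e False e0 by blast
      finally show ?thesis .
    qed
    show ?thesis
    proof (rule sep_eq[OF vsk])
      fix \<psi> assume \<psi>: "lfunc sk \<psi>"
      have \<psi>l: "Vector_Spaces.linear sk (*) \<psi>" using \<psi> by (simp add: lfunc_def)
      have "0 = (\<Sum>(a,b)\<leftarrow>map (\<lambda>(u,v). (r u, r v)) l. \<phi> a * \<psi> b)"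
        using teq2D[OF z _ \<psi>, of \<phi>] \<phi>(1) by (simp add: lfunc_def)
      also have "\<dots> = (\<Sum>(a,b)\<leftarrow>l. \<phi> (r a) * \<psi> (r b))"
        by (simp add: o_def split_def)
      also have "\<dots> = (\<Sum>(a,b)\<leftarrow>map (\<lambda>e. (e, w e)) Bl. \<phi> (r a) * \<psi> (r b))"
        by (rule teq2D[OF Bl(3)]) (use \<phi>(1) \<psi>l rl in \<open>auto simp: lfunc_def intro: lincomp0\<close>)
      also have "\<dots> = (\<Sum>e\<in>B. \<phi> (r e) * \<psi> (r (w e)))"
        using Bl by (simp add: o_def sum_list_distinct_conv_sum_set)
      also have "\<dots> = (\<Sum>e\<in>B. if e = e0 then \<psi> (r (w e)) else 0)"
        by (rule sum.cong) (auto simp: \<phi>e)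
      also have "\<dots> = \<psi> (r (w e0))" using e0 B(1) by simp
      finally show "\<psi> (r (w e0)) = \<psi> 0" using lin_0[OF \<psi>l] by simp
    qed
  qed
  show ?thesis
  proof (intro exI conjI)
    show "teq2 sv sv l (map (\<lambda>e. (e, w e)) Bl)" by (rule Bl(3))
    show "\<forall>(a,b)\<in>set (map (\<lambda>e. (e, w e)) Bl). r a = 0 \<or> r b = 0"
    proof (clarsimp)
      fix e assume e: "e \<in> set Bl" "r (w e) \<noteq> 0"
      show "r e = 0"
      proof (cases "e \<in> B1")
        case True then show ?thesis using B1(1) by blast
      next
        case False then show ?thesis using key[of e] e Bl(1) by blast
      qed
    qed
  qed
qed

lemma sum_list_concat_map:
  "sum_list (map F (concat (map G l))) = sum_list (map (\<lambda>x. sum_list (map F (G x))) l)"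
  by (induction l) auto

lemma sum_list_swap:
  fixes F :: "_ \<Rightarrow> _ \<Rightarrow> 'c::comm_monoid_add"
  shows "sum_list (map (\<lambda>a. sum_list (map (\<lambda>b. F a b) ys)) xs) = sum_list (map (\<lambda>b. sum_list (map (\<lambda>a. F a b) xs)) ys)"
proof (induction xs)
  case (Cons a xs)
  then show ?case by (simp add: sum_list_addf)
qed simp

lemma sum_list_cnj: "cnj (sum_list (map f xs)) = sum_list (map (\<lambda>x. cnj (f x)) xs)"
  by (induction xs) auto

lemma sum_list_mult_left: "(c::'b::semiring_0) * sum_list (map f xs) = sum_list (map (\<lambda>x. c * f x) xs)"
  by (induction xs) (auto simp: distrib_left)

lemma sum_list_mult_right: "sum_list (map f xs) * (c::'b::semiring_0) = sum_list (map (\<lambda>x. f x * c) xs)"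
  by (induction xs) (auto simp: distrib_right)

locale rqg =
  fixes sc :: "complex \<Rightarrow> 'a::ring_1 \<Rightarrow> 'a" and st :: "'a \<Rightarrow> 'a"
    and cop :: "'a \<Rightarrow> ('a \<times> 'a) list" and eps :: "'a \<Rightarrow> complex" and S :: "'a \<Rightarrow> 'a"
    and g :: "'a \<Rightarrow> complex"
  assumes rqg: "real_quantum_group sc st cop eps S" and chr: "character sc st g"
begin

lemma vsA: "vector_space sc"
  using rqg unfolding real_quantum_group_def coalgebra_def by simp
lemma eps_lin: "lfunc sc eps"
  using rqg unfolding real_quantum_group_def coalgebra_def by simp
lemma cop_add: "teq2 sc sc (cop (x + y)) (cop x @ cop y)"
  using rqg unfolding real_quantum_group_def coalgebra_def by simp
lemma cop_scale: "teq2 sc sc (cop (sc c x)) (map (\<lambda>(u,v). (sc c u, v)) (cop x))"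
  using rqg unfolding real_quantum_group_def coalgebra_def by simp
lemma coass: "teq3 sc sc sc
            (concat (map (\<lambda>(u,v). map (\<lambda>(p,q). (p,q,v)) (cop u)) (cop x)))
            (concat (map (\<lambda>(u,v). map (\<lambda>(p,q). (u,p,q)) (cop v)) (cop x)))"
  using rqg unfolding real_quantum_group_def coalgebra_def by simp
lemma counit1: "(\<Sum>(u,v)\<leftarrow>cop x. sc (eps u) v) = x"
  using rqg unfolding real_quantum_group_def coalgebra_def by simp
lemma counit2: "(\<Sum>(u,v)\<leftarrow>cop x. sc (eps v) u) = x"
  using rqg unfolding real_quantum_group_def coalgebra_def by simp
lemma sc_mult1: "sc c (x * y) = sc c x * y"
  using rqg unfolding real_quantum_group_def coalgebra_def by simp
lemma sc_mult2: "sc c (x * y) = x * sc c y"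
  using rqg unfolding real_quantum_group_def coalgebra_def by metis
lemma sc_mult2_dummy: "True"
  using rqg unfolding real_quantum_group_def coalgebra_def by simp
lemma cop_mult: "teq2 sc sc (cop (x * y))
              (concat (map (\<lambda>(a,b). map (\<lambda>(c,d). (a * c, b * d)) (cop y)) (cop x)))"
  using rqg unfolding real_quantum_group_def coalgebra_def by simp
lemma cop_one: "teq2 sc sc (cop 1) [(1, 1)]"
  using rqg unfolding real_quantum_group_def coalgebra_def by simp
lemma eps_mult: "eps (x * y) = eps x * eps y"
  using rqg unfolding real_quantum_group_def coalgebra_def by simp
lemma eps_one: "eps 1 = 1"
  using rqg unfolding real_quantum_group_def coalgebra_def by simp
lemma S_lin: "Vector_Spaces.linear sc sc S"
  using rqg unfolding real_quantum_group_def coalgebra_def by simp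
lemma anti1: "(\<Sum>(u,v)\<leftarrow>cop x. S u * v) = sc (eps x) 1"
  using rqg unfolding real_quantum_group_def coalgebra_def by simp
lemma anti2: "(\<Sum>(u,v)\<leftarrow>cop x. u * S v) = sc (eps x) 1"
  using rqg unfolding real_quantum_group_def coalgebra_def by simp
lemma st_add: "st (x + y) = st x + st y"
  using rqg unfolding real_quantum_group_def coalgebra_def by simp
lemma st_scale: "st (sc c x) = sc (cnj c) (st x)"
  using rqg unfolding real_quantum_group_def coalgebra_def by simp
lemma st_mult: "st (x * y) = st y * st x"
  using rqg unfolding real_quantum_group_def coalgebra_def by simp
lemma st_st: "st (st x) = x"
  using rqg unfolding real_quantum_group_def coalgebra_def by simp
lemma cop_st: "teq2 sc sc (cop (st x)) (map (\<lambda>(u,v). (st u, st v)) (cop x))"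
  using rqg unfolding real_quantum_group_def coalgebra_def by simp

lemma g_lin: "lfunc sc g" and g_mult: "g (x * y) = g x * g y" and g_one: "g 1 = 1"
  and g_st: "g (st x) = cnj (g x)"
  using chr unfolding character_def by blast+

definition lin :: "('a \<Rightarrow> complex) \<Rightarrow> bool" where "lin f \<longleftrightarrow> lfunc sc f"

definition D :: "'a \<Rightarrow> ('a \<Rightarrow> 'a \<Rightarrow> complex) \<Rightarrow> complex" where
  "D x \<Phi> = (\<Sum>(u,v)\<leftarrow>cop x. \<Phi> u v)"

definition bil :: "('a \<Rightarrow> 'a \<Rightarrow> complex) \<Rightarrow> bool" where
  "bil \<Phi> \<longleftrightarrow> (\<forall>b. lin (\<lambda>a. \<Phi> a b)) \<and> (\<forall>a. lin (\<Phi> a))"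

definition tril :: "('a \<Rightarrow> 'a \<Rightarrow> 'a \<Rightarrow> complex) \<Rightarrow> bool" where
  "tril T \<longleftrightarrow> (\<forall>b d. lin (\<lambda>a. T a b d)) \<and> (\<forall>a d. lin (\<lambda>b. T a b d)) \<and> (\<forall>a b. lin (\<lambda>d. T a b d))"

definition linA :: "('a \<Rightarrow> 'a) \<Rightarrow> bool" where "linA L \<longleftrightarrow> Vector_Spaces.linear sc sc L"

lemma linD: "lin f \<Longrightarrow> Vector_Spaces.linear sc (*) f" by (simp add: lin_def lfunc_def)
lemma lin_addD: "lin f \<Longrightarrow> f (x + y) = f x + f y" by (rule lin_add[OF linD])
lemma lin_scaleD: "lin f \<Longrightarrow> f (sc c x) = c * f x" using lin_scale[OF linD] by simp
lemma lin_0D: "lin f \<Longrightarrow> f 0 = 0" by (rule lin_0[OF linD])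
lemma lin_sum_listD: "lin f \<Longrightarrow> f (sum_list (map h xs)) = sum_list (map (\<lambda>x. f (h x)) xs)"
  by (rule lin_sum_list[OF linD])
lemma linI': "(\<And>x y. f (x + y) = f x + f y) \<Longrightarrow> (\<And>c x. f (sc c x) = c * f x) \<Longrightarrow> lin f"
  unfolding lin_def lfunc_def by (rule linI) (auto simp: vsA vs_cplx)

lemma linA_add: "linA L \<Longrightarrow> L (x + y) = L x + L y" by (simp add: linA_def lin_add)
lemma linA_scale: "linA L \<Longrightarrow> L (sc c x) = sc c (L x)" by (simp add: linA_def lin_scale)
lemma linAI: "(\<And>x y. L (x + y) = L x + L y) \<Longrightarrow> (\<And>c x. L (sc c x) = sc c (L x)) \<Longrightarrow> linA L"
  unfolding linA_def by (rule linI) (auto simp: vsA)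

lemma lin_eps[intro]: "lin eps" using eps_lin by (simp add: lin_def)
lemma lin_g[intro]: "lin g" using g_lin by (simp add: lin_def)
lemma linA_S[intro]: "linA S" using S_lin by (simp add: linA_def)
lemma linA_id[intro]: "linA (\<lambda>x. x)" by (rule linAI) auto
lemma linA_multR[intro]: "linA (\<lambda>x. x * a)" by (rule linAI) (auto simp: distrib_right sc_mult1)
lemma linA_multL[intro]: "linA (\<lambda>x. a * x)" by (rule linAI) (auto simp: distrib_left sc_mult2)
lemma linA_comp[intro]: "linA L1 \<Longrightarrow> linA L2 \<Longrightarrow> linA (\<lambda>x. L1 (L2 x))"
  by (rule linAI) (auto simp: linA_add linA_scale)

lemma lin_comp: "lin f \<Longrightarrow> linA L \<Longrightarrow> lin (\<lambda>x. f (L x))"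
  by (rule linI') (auto simp: linA_add linA_scale lin_addD lin_scaleD)
lemma lin_cmult[intro]: "lin f \<Longrightarrow> lin (\<lambda>x. c * f x)"
  by (rule linI') (auto simp: lin_addD lin_scaleD algebra_simps)
lemma lin_multc[intro]: "lin f \<Longrightarrow> lin (\<lambda>x. f x * c)"
  by (rule linI') (auto simp: lin_addD lin_scaleD algebra_simps)
lemma lin_plus[intro]: "lin f \<Longrightarrow> lin h \<Longrightarrow> lin (\<lambda>x. f x + h x)"
  by (rule linI') (auto simp: lin_addD lin_scaleD algebra_simps)
lemma lin_minus[intro]: "lin f \<Longrightarrow> lin h \<Longrightarrow> lin (\<lambda>x. f x - h x)"
  by (rule linI') (auto simp: lin_addD lin_scaleD algebra_simps)
lemma lin_zero[intro]: "lin (\<lambda>x. 0)"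
  by (rule linI') auto
lemma lin_sl[intro]: "(\<And>i. lin (F i)) \<Longrightarrow> lin (\<lambda>x. sum_list (map (\<lambda>i. F i x) l))"
  by (induction l) (auto intro: lin_plus)

lemma bilI[intro]: "(\<And>b. lin (\<lambda>a. \<Phi> a b)) \<Longrightarrow> (\<And>a. lin (\<lambda>b. \<Phi> a b)) \<Longrightarrow> bil \<Phi>"
  by (simp add: bil_def)
lemma bilD1: "bil \<Phi> \<Longrightarrow> lin (\<lambda>a. \<Phi> a b)" by (simp add: bil_def)
lemma bilD2: "bil \<Phi> \<Longrightarrow> lin (\<lambda>b. \<Phi> a b)" by (simp add: bil_def)
lemma trilI[intro]: "(\<And>b d. lin (\<lambda>a. T a b d)) \<Longrightarrow> (\<And>a d. lin (\<lambda>b. T a b d)) \<Longrightarrow> (\<And>a b. lin (\<lambda>d. T a b d)) \<Longrightarrow> tril T"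
  by (simp add: tril_def)

lemma D_teq2: "teq2 sc sc (cop x) l \<Longrightarrow> bil \<Phi> \<Longrightarrow> D x \<Phi> = (\<Sum>(u,v)\<leftarrow>l. \<Phi> u v)"
  unfolding D_def by (rule teq2_bil[OF vsA vsA vs_cplx]) (auto simp: bil_def lin_def lfunc_def)

lemma D_add: "bil \<Phi> \<Longrightarrow> D (x + y) \<Phi> = D x \<Phi> + D y \<Phi>"
  by (subst D_teq2[OF cop_add], assumption) (simp add: D_def)

lemma D_scale: "bil \<Phi> \<Longrightarrow> D (sc c x) \<Phi> = c * D x \<Phi>"
proof -
  assume b: "bil \<Phi>"
  have "D (sc c x) \<Phi> = (\<Sum>(u,v)\<leftarrow>cop x. \<Phi> (sc c u) v)"
    by (simp add: D_teq2[OF cop_scale b] o_def split_def)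
  also have "\<dots> = (\<Sum>(u,v)\<leftarrow>cop x. c * \<Phi> u v)"
    by (rule sl_cong) (auto simp: lin_scaleD[OF bilD1[OF b]])
  also have "\<dots> = c * D x \<Phi>" by (simp add: D_def sum_list_mult_left split_def)
  finally show ?thesis .
qed

lemma lin_D[intro]: "bil \<Phi> \<Longrightarrow> lin (\<lambda>x. D x \<Phi>)"
  by (rule linI') (auto simp: D_add D_scale)

lemma lin_Dp[intro]: "(\<And>u v. lin (\<lambda>x. F u v x)) \<Longrightarrow> lin (\<lambda>x. D y (\<lambda>u v. F u v x))"
  unfolding D_def by (auto simp: split_def)

lemma D_sum_list: "bil \<Phi> \<Longrightarrow> D (sum_list (map h xs)) \<Phi> = sum_list (map (\<lambda>x. D (h x) \<Phi>) xs)"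
  by (rule lin_sum_listD) auto

lemma D_coass: "tril T \<Longrightarrow> D x (\<lambda>u v. D u (\<lambda>p q. T p q v)) = D x (\<lambda>u v. D v (\<lambda>p q. T u p q))"
proof -
  assume t: "tril T"
  have "(\<Sum>(a,b,d)\<leftarrow>concat (map (\<lambda>(u,v). map (\<lambda>(p,q). (p,q,v)) (cop u)) (cop x)). T a b d) =
        (\<Sum>(a,b,d)\<leftarrow>concat (map (\<lambda>(u,v). map (\<lambda>(p,q). (u,p,q)) (cop v)) (cop x)). T a b d)"
    by (rule teq3_tril[OF vsA vsA vsA coass]) (use t in \<open>auto simp: tril_def lin_def\<close>)
  then show ?thesis
    by (simp add: D_def sum_list_concat_map split_def o_def)
qed

lemma D_mult: "bil \<Phi> \<Longrightarrow> D (x * y) \<Phi> = D x (\<lambda>a b. D y (\<lambda>c d. \<Phi> (a * c) (b * d)))"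
  by (subst D_teq2[OF cop_mult], assumption) (simp add: D_def sum_list_concat_map split_def o_def)

lemma D_one: "bil \<Phi> \<Longrightarrow> D 1 \<Phi> = \<Phi> 1 1"
  by (simp add: D_teq2[OF cop_one])

lemma D_st: "bil \<Phi> \<Longrightarrow> D (st x) \<Phi> = D x (\<lambda>u v. \<Phi> (st u) (st v))"
  by (subst D_teq2[OF cop_st], assumption) (simp add: D_def split_def o_def)

lemma D_counit1: "lin f \<Longrightarrow> D x (\<lambda>u v. eps u * f v) = f x"
proof -
  assume f: "lin f"
  have "f x = f (\<Sum>(u,v)\<leftarrow>cop x. sc (eps u) v)" by (simp add: counit1)
  also have "\<dots> = D x (\<lambda>u v. eps u * f v)"
    by (simp add: lin_sum_listD[OF f] D_def split_def lin_scaleD[OF f])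
  finally show ?thesis by simp
qed

lemma D_counit2: "lin f \<Longrightarrow> D x (\<lambda>u v. f u * eps v) = f x"
proof -
  assume f: "lin f"
  have "f x = f (\<Sum>(u,v)\<leftarrow>cop x. sc (eps v) u)" by (simp add: counit2)
  also have "\<dots> = D x (\<lambda>u v. f u * eps v)"
    by (simp add: lin_sum_listD[OF f] D_def split_def lin_scaleD[OF f] mult.commute)
  finally show ?thesis by simp
qed

lemma D_swap: "D x (\<lambda>u v. D y (\<lambda>p q. F u v p q)) = D y (\<lambda>p q. D x (\<lambda>u v. F u v p q))"
  unfolding D_def using sum_list_swap[of "\<lambda>a b. F (fst a) (snd a) (fst b) (snd b)" "cop y" "cop x"]
  by (simp add: split_def)

lemma D_cmult: "c * D x \<Phi> = D x (\<lambda>u v. c * \<Phi> u v)"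
  by (simp add: D_def sum_list_mult_left split_def)
lemma D_multc: "D x \<Phi> * c = D x (\<lambda>u v. \<Phi> u v * c)"
  by (simp add: D_def sum_list_mult_right split_def)
lemma D_plus: "D x \<Phi> + D x \<Psi> = D x (\<lambda>u v. \<Phi> u v + \<Psi> u v)"
  by (simp add: D_def sum_list_addf split_def)
lemma D_cnj: "cnj (D x \<Phi>) = D x (\<lambda>u v. cnj (\<Phi> u v))"
  by (simp add: D_def sum_list_cnj split_def)
lemma D_lin_sum: "lin f \<Longrightarrow> f (\<Sum>(u,v)\<leftarrow>cop x. H u v) = D x (\<lambda>u v. f (H u v))"
  by (simp add: lin_sum_listD D_def split_def)
lemma D_cong: "(\<And>u v. \<Phi> u v = \<Psi> u v) \<Longrightarrow> D x \<Phi> = D x \<Psi>"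
  by (simp add: D_def)

end

context rqg begin

definition conv :: "('a \<Rightarrow> complex) \<Rightarrow> ('a \<Rightarrow> complex) \<Rightarrow> 'a \<Rightarrow> complex" where
  "conv \<phi> \<psi> x = D x (\<lambda>u v. \<phi> u * \<psi> v)"

definition k :: "'a \<Rightarrow> complex" where "k x = g (S x)"

lemma bil_prod[intro]: "lin \<phi> \<Longrightarrow> lin \<psi> \<Longrightarrow> bil (\<lambda>u v. \<phi> u * \<psi> v)"
  by (intro bilI lin_multc lin_cmult)

lemma lin_conv[intro, simp]: "lin \<phi> \<Longrightarrow> lin \<psi> \<Longrightarrow> lin (conv \<phi> \<psi>)"
  unfolding conv_def[abs_def] by (rule lin_D) (rule bil_prod)

lemma lin_k[intro, simp]: "lin k"
  unfolding k_def[abs_def] by (rule lin_comp) auto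

lemma lin_g'[simp]: "lin g" and lin_eps'[simp]: "lin eps" by auto

lemma conv_assoc: "lin \<phi> \<Longrightarrow> lin \<psi> \<Longrightarrow> lin \<chi> \<Longrightarrow> conv (conv \<phi> \<psi>) \<chi> = conv \<phi> (conv \<psi> \<chi>)"
proof (rule ext)
  fix x assume l: "lin \<phi>" "lin \<psi>" "lin \<chi>"
  have "conv (conv \<phi> \<psi>) \<chi> x = D x (\<lambda>u v. D u (\<lambda>p q. \<phi> p * \<psi> q * \<chi> v))"
    unfolding conv_def by (simp add: D_multc)
  also have "\<dots> = D x (\<lambda>u v. D v (\<lambda>p q. \<phi> u * \<psi> p * \<chi> q))"
    by (rule D_coass) (use l in \<open>auto intro!: trilI lin_multc lin_cmult\<close>)
  also have "\<dots> = conv \<phi> (conv \<psi> \<chi>) x"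
    unfolding conv_def by (simp add: D_cmult mult.assoc)
  finally show "conv (conv \<phi> \<psi>) \<chi> x = conv \<phi> (conv \<psi> \<chi>) x" .
qed

lemma conv_eps_left[simp]: "lin \<phi> \<Longrightarrow> conv eps \<phi> = \<phi>"
  unfolding conv_def by (rule ext) (rule D_counit1)
lemma conv_eps_right[simp]: "lin \<phi> \<Longrightarrow> conv \<phi> eps = \<phi>"
  unfolding conv_def by (rule ext) (rule D_counit2)

lemma g_sum_list: "g (sum_list (map h xs)) = sum_list (map (\<lambda>x. g (h x)) xs)"
  by (rule lin_sum_listD) auto

lemma g_scale: "g (sc c x) = c * g x" by (rule lin_scaleD) auto

lemma conv_g_k[simp]: "conv g k = eps"
proof (rule ext)
  fix x
  have "conv g k x = g (\<Sum>(u,v)\<leftarrow>cop x. u * S v)"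
    unfolding conv_def D_def k_def by (simp add: g_sum_list split_def g_mult)
  also have "\<dots> = eps x" by (simp add: anti2 g_scale g_one)
  finally show "conv g k x = eps x" .
qed

lemma conv_k_g[simp]: "conv k g = eps"
proof (rule ext)
  fix x
  have "conv k g x = g (\<Sum>(u,v)\<leftarrow>cop x. S u * v)"
    unfolding conv_def D_def k_def by (simp add: g_sum_list split_def g_mult)
  also have "\<dots> = eps x" by (simp add: anti1 g_scale g_one)
  finally show "conv k g x = eps x" .
qed

lemma conv_one: "lin \<phi> \<Longrightarrow> lin \<psi> \<Longrightarrow> conv \<phi> \<psi> 1 = \<phi> 1 * \<psi> 1"
  unfolding conv_def by (rule D_one) (rule bil_prod)

lemma k_one[simp]: "k 1 = 1"
  using conv_one[of k g] by (simp add: g_one eps_one)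

lemma conv_assoc'[simp]: "lin \<phi> \<Longrightarrow> lin \<psi> \<Longrightarrow> lin \<chi> \<Longrightarrow> conv (conv \<phi> \<psi>) \<chi> = conv \<phi> (conv \<psi> \<chi>)"
  by (rule conv_assoc)

lemma conv_gk_cancel[simp]: "lin X \<Longrightarrow> conv g (conv k X) = X"
  using conv_assoc[of g k X] by simp
lemma conv_kg_cancel[simp]: "lin X \<Longrightarrow> conv k (conv g X) = X"
  using conv_assoc[of k g X] by simp

abbreviation AdA where "AdA \<equiv> Ad sc cop S g"

definition Ad' :: "'a \<Rightarrow> 'a" where
  "Ad' x = (\<Sum>(u,v)\<leftarrow>cop x. \<Sum>(p,q)\<leftarrow>cop u. sc (g p * g (S v)) q)"

lemma Ad_eq: "lin h \<Longrightarrow> h (AdA x) = conv (conv k h) g x"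
proof -
  assume h: "lin h"
  have "h (AdA x) = D x (\<lambda>u v. D u (\<lambda>p q. g (S p) * g v * h q))"
    unfolding Ad_def by (simp add: D_lin_sum[OF h] lin_sum_listD[OF h] lin_scaleD[OF h] D_def split_def)
  also have "\<dots> = conv (conv k h) g x"
    unfolding conv_def k_def by (simp add: D_multc D_cmult mult_ac)
  finally show ?thesis .
qed

lemma Ad'_eq: "lin h \<Longrightarrow> h (Ad' x) = conv (conv g h) k x"
proof -
  assume h: "lin h"
  have "h (Ad' x) = D x (\<lambda>u v. D u (\<lambda>p q. g p * g (S v) * h q))"
    unfolding Ad'_def by (simp add: D_lin_sum[OF h] lin_sum_listD[OF h] lin_scaleD[OF h] D_def split_def)
  also have "\<dots> = conv (conv g h) k x"
    unfolding conv_def k_def by (simp add: D_multc D_cmult mult_ac)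
  finally show ?thesis .
qed

lemma eqI_lin: "(\<And>h. lin h \<Longrightarrow> h x = h y) \<Longrightarrow> x = y"
  by (rule sep_eq[OF vsA]) (simp add: lin_def)

lemma Ad_Ad': "AdA (Ad' x) = x"
proof (rule eqI_lin)
  fix h assume h: "lin h"
  have e: "conv (conv g (conv (conv k h) g)) k = h" using h by simp
  have "h (AdA (Ad' x)) = conv (conv k h) g (Ad' x)" by (rule Ad_eq[OF h])
  also have "\<dots> = conv (conv g (conv (conv k h) g)) k x" by (rule Ad'_eq) (use h in simp)
  finally show "h (AdA (Ad' x)) = h x" using e by simp
qed

lemma Ad'_Ad: "Ad' (AdA x) = x"
proof (rule eqI_lin)
  fix h assume h: "lin h"
  have e: "conv (conv k (conv (conv g h) k)) g = h" using h by simp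
  have "h (Ad' (AdA x)) = conv (conv g h) k (AdA x)" by (rule Ad'_eq[OF h])
  also have "\<dots> = conv (conv k (conv (conv g h) k)) g x" by (rule Ad_eq) (use h in simp)
  finally show "h (Ad' (AdA x)) = h x" using e by simp
qed

lemma linA_Ad: "linA AdA"
proof (rule linAI; rule eqI_lin)
  fix h x y assume h: "lin h"
  show "h (AdA (x + y)) = h (AdA x + AdA y)"
    using lin_addD[of "conv (conv k h) g" x y] h by (simp only: Ad_eq[OF h] lin_addD[OF h] lin_conv lin_k lin_g')
next
  fix h c x assume h: "lin h"
  show "h (AdA (sc c x)) = h (sc c (AdA x))"
    using lin_scaleD[of "conv (conv k h) g" c x] h by (simp only: Ad_eq[OF h] lin_scaleD[OF h] lin_conv lin_k lin_g')
qed

lemma linA_Ad': "linA Ad'"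
proof (rule linAI; rule eqI_lin)
  fix h x y assume h: "lin h"
  show "h (Ad' (x + y)) = h (Ad' x + Ad' y)"
    using lin_addD[of "conv (conv g h) k" x y] h by (simp only: Ad'_eq[OF h] lin_addD[OF h] lin_conv lin_k lin_g')
next
  fix h c x assume h: "lin h"
  show "h (Ad' (sc c x)) = h (sc c (Ad' x))"
    using lin_scaleD[of "conv (conv g h) k" c x] h by (simp only: Ad'_eq[OF h] lin_scaleD[OF h] lin_conv lin_k lin_g')
qed

lemma inv_Ad: "inv AdA = Ad'"
  by (rule inv_equality) (simp_all add: Ad_Ad' Ad'_Ad)

lemma bij_Ad: "bij AdA"
  by (rule o_bij[of Ad']) (auto simp: Ad_Ad' Ad'_Ad)

lemma comp_Ad': "lin h \<Longrightarrow> (\<lambda>y. h (Ad' y)) = conv (conv g h) k"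
  by (rule ext) (rule Ad'_eq)
lemma comp_Ad: "lin h \<Longrightarrow> (\<lambda>y. h (AdA y)) = conv (conv k h) g"
  by (rule ext) (rule Ad_eq)

lemma eps_Ad': "eps (Ad' x) = eps x"
  by (simp add: Ad'_eq)

lemma Ad'_one: "Ad' 1 = 1"
proof (rule eqI_lin)
  fix h assume h: "lin h"
  show "h (Ad' 1) = h 1" using h by (simp add: Ad'_eq[OF h] conv_one g_one)
qed

lemma conv_Ad': "lin \<phi> \<Longrightarrow> lin \<psi> \<Longrightarrow> conv \<phi> \<psi> (Ad' x) = conv (\<lambda>y. \<phi> (Ad' y)) (\<lambda>y. \<psi> (Ad' y)) x"
  by (simp add: Ad'_eq comp_Ad')

lemma conv_Ad: "lin \<phi> \<Longrightarrow> lin \<psi> \<Longrightarrow> conv \<phi> \<psi> (AdA x) = conv (\<lambda>y. \<phi> (AdA y)) (\<lambda>y. \<psi> (AdA y)) x"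
  by (simp add: Ad_eq comp_Ad)

end

context rqg begin

lemma lin_multR_arg[intro]: "lin f \<Longrightarrow> lin (\<lambda>x. f (x * c))"
  by (rule lin_comp) auto
lemma lin_multL_arg[intro]: "lin f \<Longrightarrow> lin (\<lambda>x. f (c * x))"
  by (rule lin_comp) auto
lemma lin_S_arg[intro]: "lin f \<Longrightarrow> lin (\<lambda>x. f (S x))"
  by (rule lin_comp) auto
lemma lin_D_multR[intro]: "bil \<Phi> \<Longrightarrow> lin (\<lambda>x. D (x * c) \<Phi>)"
  by (rule lin_comp[OF lin_D]) auto
lemma lin_D_multL[intro]: "bil \<Phi> \<Longrightarrow> lin (\<lambda>x. D (c * x) \<Phi>)"
  by (rule lin_comp[OF lin_D]) auto
lemma lin_D_S[intro]: "bil \<Phi> \<Longrightarrow> lin (\<lambda>x. D (S x) \<Phi>)"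
  by (rule lin_comp[OF lin_D]) auto

lemma eps_conv: "eps x = D x (\<lambda>p q. g p * k q)"
  using conv_g_k unfolding conv_def by metis

definition conv2 :: "('a \<Rightarrow> 'a \<Rightarrow> complex) \<Rightarrow> ('a \<Rightarrow> 'a \<Rightarrow> complex) \<Rightarrow> 'a \<Rightarrow> 'a \<Rightarrow> complex" where
  "conv2 P Q a b = D a (\<lambda>a1 a2. D b (\<lambda>b1 b2. P a1 b1 * Q a2 b2))"

lemma bil_conv2: assumes p: "bil P" and q: "bil Q" shows "bil (conv2 P Q)"
  unfolding conv2_def
  by (intro bilI lin_D lin_Dp lin_multc lin_cmult bilD1[OF p] bilD2[OF p] bilD1[OF q] bilD2[OF q])

lemma conv2_assoc:
  assumes p: "bil P" and q: "bil Q" and r: "bil R"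
  shows "conv2 (conv2 P Q) R a b = conv2 P (conv2 Q R) a b"
proof -
  have "conv2 (conv2 P Q) R a b =
     D a (\<lambda>a1 a2. D b (\<lambda>b1 b2. D a1 (\<lambda>a11 a12. D b1 (\<lambda>b11 b12. P a11 b11 * Q a12 b12 * R a2 b2))))"
    unfolding conv2_def by (simp add: D_multc)
  also have "\<dots> = D a (\<lambda>a1 a2. D a1 (\<lambda>a11 a12. D b (\<lambda>b1 b2. D b1 (\<lambda>b11 b12. P a11 b11 * Q a12 b12 * R a2 b2))))"
    by (intro D_cong) (rule D_swap)
  also have "\<dots> = D a (\<lambda>a1 a2. D a2 (\<lambda>a21 a22. D b (\<lambda>b1 b2. D b1 (\<lambda>b11 b12. P a1 b11 * Q a21 b12 * R a22 b2))))"
    by (rule D_coass) (intro trilI lin_Dp lin_multc lin_cmult bilD1[OF p] bilD1[OF q] bilD1[OF r])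
  also have "\<dots> = D a (\<lambda>a1 a2. D a2 (\<lambda>a21 a22. D b (\<lambda>b1 b2. D b2 (\<lambda>b21 b22. P a1 b1 * Q a21 b21 * R a22 b22))))"
    by (intro D_cong D_coass) (intro trilI lin_multc lin_cmult bilD2[OF p] bilD2[OF q] bilD2[OF r])
  also have "\<dots> = D a (\<lambda>a1 a2. D b (\<lambda>b1 b2. D a2 (\<lambda>a21 a22. D b2 (\<lambda>b21 b22. P a1 b1 * Q a21 b21 * R a22 b22))))"
    by (intro D_cong) (rule D_swap)
  also have "\<dots> = conv2 P (conv2 Q R) a b"
    unfolding conv2_def by (simp add: D_cmult mult.assoc)
  finally show ?thesis .
qed

lemma prodD: "D x \<Phi> * D y \<Psi> = D x (\<lambda>u v. D y (\<lambda>p q. \<Phi> u v * \<Psi> p q))"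
  unfolding D_multc[of x \<Phi> "D y \<Psi>"] by (simp only: D_cmult)

lemma conv2_unit_right: assumes p: "bil P" shows "conv2 P (\<lambda>a b. eps a * eps b) a b = P a b"
proof -
  have "conv2 P (\<lambda>a b. eps a * eps b) a b = D a (\<lambda>a1 a2. D b (\<lambda>b1 b2. P a1 b1 * eps b2) * eps a2)"
    unfolding conv2_def by (intro D_cong) (simp add: D_multc D_cmult mult_ac)
  also have "\<dots> = D a (\<lambda>a1 a2. P a1 b * eps a2)"
    by (intro D_cong) (simp add: D_counit2 bilD2[OF p])
  also have "\<dots> = P a b" by (rule D_counit2) (rule bilD1[OF p])
  finally show ?thesis .
qed

lemma conv2_unit_left: assumes p: "bil P" shows "conv2 (\<lambda>a b. eps a * eps b) P a b = P a b"
proof -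
  have "conv2 (\<lambda>a b. eps a * eps b) P a b = D a (\<lambda>a1 a2. eps a1 * D b (\<lambda>b1 b2. eps b1 * P a2 b2))"
    unfolding conv2_def by (intro D_cong) (simp add: D_multc D_cmult mult_ac)
  also have "\<dots> = D a (\<lambda>a1 a2. eps a1 * P a2 b)"
    by (intro D_cong) (simp add: D_counit1 bilD2[OF p])
  also have "\<dots> = P a b" by (rule D_counit1) (rule bilD1[OF p])
  finally show ?thesis .
qed

lemma k_mult: "k (a * b) = k a * k b"
proof -
  define F where "F = (\<lambda>a b. k (a * b))"
  define M where "M = (\<lambda>a b. g a * g b)"
  define G where "G = (\<lambda>a b. k a * k b)"
  define E where "E = (\<lambda>a b. eps a * eps b)"
  have bF: "bil F" unfolding F_def by (intro bilI lin_multR_arg lin_multL_arg lin_k)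
  have bM: "bil M" unfolding M_def by (intro bilI lin_multc lin_cmult lin_g)
  have bG: "bil G" unfolding G_def by (intro bilI lin_multc lin_cmult lin_k)
  have FM: "conv2 F M = E"
  proof (intro ext)
    fix a b
    have "conv2 F M a b = D a (\<lambda>a1 a2. D b (\<lambda>c d. k (a1 * c) * g (a2 * d)))"
      unfolding conv2_def F_def M_def by (simp add: g_mult)
    also have "\<dots> = D (a * b) (\<lambda>u v. k u * g v)"
      by (rule D_mult[symmetric]) (intro bilI lin_multc lin_cmult lin_g lin_k)
    also have "\<dots> = eps a * eps b" using conv_k_g unfolding conv_def by (metis eps_mult)
    finally show "conv2 F M a b = E a b" unfolding E_def .
  qed
  have MG: "conv2 M G = E"
  proof (intro ext)
    fix a b
    have "conv2 M G a b = D a (\<lambda>a1 a2. g a1 * k a2) * D b (\<lambda>b1 b2. g b1 * k b2)"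
      unfolding conv2_def M_def G_def prodD by (intro D_cong) (simp add: mult_ac)
    also have "\<dots> = eps a * eps b" by (simp add: eps_conv)
    finally show "conv2 M G a b = E a b" unfolding E_def .
  qed
  have "F a b = conv2 F E a b" unfolding E_def using conv2_unit_right[OF bF] by simp
  also have "\<dots> = conv2 F (conv2 M G) a b" by (simp add: MG)
  also have "\<dots> = conv2 (conv2 F M) G a b" by (rule conv2_assoc[symmetric, OF bF bM bG])
  also have "\<dots> = G a b" unfolding FM E_def by (rule conv2_unit_left[OF bG])
  finally show ?thesis unfolding F_def G_def .
qed

lemma k_k: "k (S x) = g x"
proof -
  have "conv k (\<lambda>x. k (S x)) = eps"
  proof (rule ext)
    fix x
    have "conv k (\<lambda>x. k (S x)) x = k (\<Sum>(u,v)\<leftarrow>cop x. u * S v)"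
      unfolding conv_def D_def by (simp add: lin_sum_listD[OF lin_k] split_def k_mult)
    also have "\<dots> = eps x" by (simp add: anti2 lin_scaleD[OF lin_k])
    finally show "conv k (\<lambda>x. k (S x)) x = eps x" .
  qed
  then have "conv g (conv k (\<lambda>x. k (S x))) = g" by simp
  then have "(\<lambda>x. k (S x)) = g" by (simp add: lin_S_arg)
  then show ?thesis by metis
qed

end

context rqg begin

lemma linA_cmultL[intro]: "linA L \<Longrightarrow> linA (\<lambda>x. c * L x)"
  using linA_comp[OF linA_multL] .
lemma linA_cmultR[intro]: "linA L \<Longrightarrow> linA (\<lambda>x. L x * c)"
  using linA_comp[OF linA_multR] .
lemma linA_SL[intro]: "linA L \<Longrightarrow> linA (\<lambda>x. S (L x))"
  using linA_comp[OF linA_S] .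
lemma bil_L1[intro]: "bil \<Phi> \<Longrightarrow> linA L \<Longrightarrow> lin (\<lambda>a. \<Phi> (L a) d)"
  by (rule lin_comp[OF bilD1])
lemma bil_L2[intro]: "bil \<Phi> \<Longrightarrow> linA L \<Longrightarrow> lin (\<lambda>b. \<Phi> d (L b))"
  by (rule lin_comp[OF bilD2])
lemma lin_D_L[intro]: "bil \<Psi> \<Longrightarrow> linA L \<Longrightarrow> lin (\<lambda>x. D (L x) \<Psi>)"
  by (rule lin_comp[OF lin_D])

lemma lem_a: "bil \<Psi> \<Longrightarrow> lin (\<lambda>a. \<Psi> (a * c) d)"
  by (rule bil_L1) (auto intro: linA_cmultR linA_id)
lemma lem_b: "bil \<Psi> \<Longrightarrow> lin (\<lambda>b. \<Psi> d (b * c))"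
  by (rule bil_L2) (auto intro: linA_cmultR linA_id)
lemma lem_c: "bil \<Psi> \<Longrightarrow> lin (\<lambda>v. \<Psi> (c * S v) d)"
  by (rule bil_L1, assumption, rule linA_cmultL[OF linA_S])
lemma lem_d: "bil \<Psi> \<Longrightarrow> lin (\<lambda>u. \<Psi> d (c * S u))"
  by (rule bil_L2, assumption, rule linA_cmultL[OF linA_S])

lemma L2: assumes b: "bil \<Psi>"
  shows "D p (\<lambda>p1 p2. D (S p1) (\<lambda>a1 b1. D p2 (\<lambda>a2 b2. \<Psi> (a1 * a2) (b1 * b2)))) = eps p * \<Psi> 1 1"
proof -
  have "D p (\<lambda>p1 p2. D (S p1) (\<lambda>a1 b1. D p2 (\<lambda>a2 b2. \<Psi> (a1 * a2) (b1 * b2)))) = D p (\<lambda>p1 p2. D (S p1 * p2) \<Psi>)"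
    by (intro D_cong) (rule D_mult[OF b, symmetric])
  also have "\<dots> = D (\<Sum>(u,v)\<leftarrow>cop p. S u * v) \<Psi>"
    unfolding D_def[of p] by (simp add: D_sum_list[OF b] split_def)
  also have "\<dots> = eps p * \<Psi> 1 1" by (simp add: anti1 D_scale[OF b] D_one[OF b])
  finally show ?thesis .
qed

lemma L1: assumes b: "bil \<Psi>"
  shows "D q (\<lambda>q1 q2. D q1 (\<lambda>a2 b2. D q2 (\<lambda>u v. \<Psi> (a2 * S v) (b2 * S u)))) = eps q * \<Psi> 1 1"
proof -
  have "D q (\<lambda>q1 q2. D q1 (\<lambda>a2 b2. D q2 (\<lambda>u v. \<Psi> (a2 * S v) (b2 * S u)))) =
        D q (\<lambda>a2 s. D s (\<lambda>b2 q2. D q2 (\<lambda>u v. \<Psi> (a2 * S v) (b2 * S u))))"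
    by (rule D_coass) (intro trilI lin_Dp lin_D bilI lem_a[OF b] lem_b[OF b] lem_c[OF b] lem_d[OF b])
  also have "\<dots> = D q (\<lambda>a2 s. D s (\<lambda>w v. D w (\<lambda>b2 u. \<Psi> (a2 * S v) (b2 * S u))))"
    by (rule D_cong, rule D_coass[symmetric], intro trilI lin_Dp lin_D bilI lem_a[OF b] lem_b[OF b] lem_c[OF b] lem_d[OF b])
  also have "\<dots> = D q (\<lambda>a2 s. D s (\<lambda>w v. eps w * \<Psi> (a2 * S v) 1))"
  proof (intro D_cong)
    fix a2 s w v
    have l: "lin (\<Psi> (a2 * S v))" using bilD2[OF b] by simp
    have "D w (\<lambda>b2 u. \<Psi> (a2 * S v) (b2 * S u)) = \<Psi> (a2 * S v) (\<Sum>(b2,u)\<leftarrow>cop w. b2 * S u)"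
      by (simp add: lin_sum_listD[OF l] D_def split_def)
    also have "\<dots> = eps w * \<Psi> (a2 * S v) 1" by (simp add: anti2 lin_scaleD[OF l])
    finally show "D w (\<lambda>b2 u. \<Psi> (a2 * S v) (b2 * S u)) = eps w * \<Psi> (a2 * S v) 1" .
  qed
  also have "\<dots> = D q (\<lambda>a2 s. \<Psi> (a2 * S s) 1)"
    by (intro D_cong D_counit1 lem_c[OF b])
  also have "\<dots> = \<Psi> (\<Sum>(a2,s)\<leftarrow>cop q. a2 * S s) 1"
  proof -
    have l: "lin (\<lambda>a. \<Psi> a 1)" using bilD1[OF b] by simp
    show ?thesis by (simp add: lin_sum_listD[OF l] D_def split_def)
  qed
  also have "\<dots> = eps q * \<Psi> 1 1" using lin_scaleD[OF bilD1[OF b]] by (simp add: anti2)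
  finally show ?thesis .
qed

lemma S2: assumes b: "bil \<Phi>" shows "D (S x) \<Phi> = D x (\<lambda>u v. \<Phi> (S v) (S u))"
proof -
  note R = trilI bilI lin_Dp lin_D lin_D_S bil_L1[OF b] bil_L2[OF b] linA_cmultL linA_cmultR linA_S linA_id
  have "D (S x) \<Phi> = D x (\<lambda>p q. D (S p) \<Phi> * eps q)"
    by (rule D_counit2[symmetric]) (rule lin_D_S[OF b])
  also have "\<dots> = D x (\<lambda>p q. D (S p) (\<lambda>a1 b1. D q (\<lambda>q1 q2. D q1 (\<lambda>a2 b2. D q2 (\<lambda>u v.
       \<Phi> (a1 * (a2 * S v)) (b1 * (b2 * S u)))))))"
  proof (rule D_cong)
    fix p q
    have "D (S p) \<Phi> * eps q = D (S p) (\<lambda>a1 b1. eps q * \<Phi> a1 b1)" by (subst mult.commute) (rule D_cmult)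
    also have "\<dots> = D (S p) (\<lambda>a1 b1. D q (\<lambda>q1 q2. D q1 (\<lambda>a2 b2. D q2 (\<lambda>u v.
       \<Phi> (a1 * (a2 * S v)) (b1 * (b2 * S u))))))"
    proof (rule D_cong)
      fix a1 b1
      have bb: "bil (\<lambda>\<alpha> \<beta>. \<Phi> (a1 * \<alpha>) (b1 * \<beta>))" by (intro R)
      show "eps q * \<Phi> a1 b1 = D q (\<lambda>q1 q2. D q1 (\<lambda>a2 b2. D q2 (\<lambda>u v.
       \<Phi> (a1 * (a2 * S v)) (b1 * (b2 * S u)))))"
        using L1[OF bb, of q] by simp
    qed
    finally show "D (S p) \<Phi> * eps q = D (S p) (\<lambda>a1 b1. D q (\<lambda>q1 q2. D q1 (\<lambda>a2 b2. D q2 (\<lambda>u v.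
       \<Phi> (a1 * (a2 * S v)) (b1 * (b2 * S u))))))" .
  qed
  also have "\<dots> = D x (\<lambda>p q. D q (\<lambda>q1 q2. D (S p) (\<lambda>a1 b1. D q1 (\<lambda>a2 b2. D q2 (\<lambda>u v.
       \<Phi> (a1 * (a2 * S v)) (b1 * (b2 * S u)))))))"
    by (rule D_cong) (rule D_swap)
  also have "\<dots> = D x (\<lambda>p q. D p (\<lambda>p1 p2. D (S p1) (\<lambda>a1 b1. D p2 (\<lambda>a2 b2. D q (\<lambda>u v.
       \<Phi> (a1 * (a2 * S v)) (b1 * (b2 * S u)))))))"
    by (rule D_coass[symmetric]) (intro R)
  also have "\<dots> = D x (\<lambda>p q. D p (\<lambda>p1 p2. D (S p1) (\<lambda>a1 b1. D p2 (\<lambda>a2 b2. D q (\<lambda>u v.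
       \<Phi> (a1 * a2 * S v) (b1 * b2 * S u))))))"
    by (intro D_cong) (simp add: mult.assoc)
  also have "\<dots> = D x (\<lambda>p q. eps p * D q (\<lambda>u v. \<Phi> (S v) (S u)))"
  proof (rule D_cong)
    fix p q
    have bb: "bil (\<lambda>\<alpha> \<beta>. D q (\<lambda>u v. \<Phi> (\<alpha> * S v) (\<beta> * S u)))" by (intro R)
    show "D p (\<lambda>p1 p2. D (S p1) (\<lambda>a1 b1. D p2 (\<lambda>a2 b2. D q (\<lambda>u v.
       \<Phi> (a1 * a2 * S v) (b1 * b2 * S u))))) = eps p * D q (\<lambda>u v. \<Phi> (S v) (S u))"
      using L2[OF bb, of p] by simp
  qed
  also have "\<dots> = D x (\<lambda>u v. \<Phi> (S v) (S u))"
    by (rule D_counit1) (intro R)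
  finally show ?thesis .
qed

lemma conv_S: "lin \<phi> \<Longrightarrow> lin \<psi> \<Longrightarrow> conv \<phi> \<psi> (S x) = conv (\<lambda>y. \<psi> (S y)) (\<lambda>y. \<phi> (S y)) x"
  unfolding conv_def by (subst S2) (auto simp: mult.commute)

end

context rqg begin

definition bar :: "('a \<Rightarrow> complex) \<Rightarrow> 'a \<Rightarrow> complex" where "bar \<phi> y = cnj (\<phi> (st y))"

lemma lin_bar[intro, simp]: "lin \<phi> \<Longrightarrow> lin (bar \<phi>)"
  unfolding bar_def[abs_def] by (rule linI') (auto simp: st_add st_scale lin_addD lin_scaleD)

lemma bar_bar[simp]: "bar (bar \<phi>) = \<phi>" by (rule ext) (simp add: bar_def st_st)

lemma bar_st: "bar \<phi> (st x) = cnj (\<phi> x)" by (simp add: bar_def st_st)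

lemma D_st_prod: "lin \<phi> \<Longrightarrow> lin \<psi> \<Longrightarrow> D (st x) (\<lambda>u v. \<phi> u * \<psi> v) = cnj (D x (\<lambda>u v. bar \<phi> u * bar \<psi> v))"
  by (simp add: D_st bil_prod D_cnj bar_def st_st)

lemma eps_st: "eps (st x) = cnj (eps x)"
proof -
  have L: "conv (bar eps) \<phi> = \<phi>" if l: "lin \<phi>" for \<phi>
  proof (rule ext)
    fix x
    have "cnj (\<phi> x) = bar \<phi> (st x)" by (simp add: bar_st)
    also have "\<dots> = D (st x) (\<lambda>u v. eps u * bar \<phi> v)" by (rule D_counit1[symmetric]) (simp add: l)
    also have "\<dots> = cnj (D x (\<lambda>u v. bar eps u * \<phi> v))"
      by (simp add: D_st_prod l)
    finally have "\<phi> x = D x (\<lambda>u v. bar eps u * \<phi> v)" by (metis complex_cnj_cnj)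
    then show "conv (bar eps) \<phi> x = \<phi> x" by (simp add: conv_def)
  qed
  have "bar eps = conv (bar eps) eps" by simp
  also have "\<dots> = eps" by (rule L) simp
  finally have "bar eps (st x) = eps (st x)" by simp
  then show ?thesis by (simp add: bar_st)
qed

lemma g_sum_list': "g (sum_list (map h xs)) = sum_list (map (\<lambda>x. g (h x)) xs)"
  by (rule g_sum_list)

lemma kappa: "cnj (g (S (st y))) = k y"
proof -
  have B: "bar k = (\<lambda>y. cnj (g (S (st y))))" by (rule ext) (simp add: bar_def k_def)
  have "conv (bar k) g = eps"
  proof (rule ext)
    fix x
    have "eps (st x) = g (\<Sum>(u,v)\<leftarrow>cop (st x). S u * v)" by (simp add: anti1 g_scale g_one)
    also have "\<dots> = D (st x) (\<lambda>u v. k u * g v)" by (simp add: g_sum_list D_def split_def g_mult k_def)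
    also have "\<dots> = cnj (D x (\<lambda>u v. bar k u * bar g v))" by (rule D_st_prod) auto
    also have "\<dots> = cnj (conv (bar k) g x)" by (simp add: conv_def bar_def g_st)
    finally show "conv (bar k) g x = eps x" by (simp add: eps_st)
  qed
  note kg = this
  have "bar k = conv (bar k) (conv g k)" by simp
  also have "\<dots> = conv (conv (bar k) g) k" by (rule conv_assoc[symmetric]) auto
  also have "\<dots> = k" using kg by simp
  finally have "bar k = k" .
  then show ?thesis using B by metis
qed

definition flat :: "('a \<Rightarrow> complex) \<Rightarrow> 'a \<Rightarrow> complex" where "flat \<phi> x = cnj (\<phi> (st (S x)))"

lemma lin_flat[intro, simp]: "lin \<phi> \<Longrightarrow> lin (flat \<phi>)"
proof -
  assume "lin \<phi>"
  then have "lin (\<lambda>x. bar \<phi> (S x))" by (intro lin_S_arg lin_bar)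
  then show ?thesis by (simp add: flat_def bar_def[abs_def] flat_def[abs_def])
qed

lemma flat_conv: "lin \<phi> \<Longrightarrow> lin \<psi> \<Longrightarrow> flat (conv \<phi> \<psi>) = conv (flat \<psi>) (flat \<phi>)"
proof (rule ext)
  fix x assume l: "lin \<phi>" "lin \<psi>"
  have "flat (conv \<phi> \<psi>) x = cnj (cnj (D (S x) (\<lambda>u v. bar \<phi> u * bar \<psi> v)))"
    by (simp add: flat_def conv_def D_st_prod l)
  also have "\<dots> = conv (bar \<phi>) (bar \<psi>) (S x)" by (simp add: conv_def)
  also have "\<dots> = conv (\<lambda>y. bar \<psi> (S y)) (\<lambda>y. bar \<phi> (S y)) x" by (rule conv_S) (auto simp: l)
  also have "\<dots> = conv (flat \<psi>) (flat \<phi>) x" by (simp add: flat_def[abs_def] bar_def)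
  finally show "flat (conv \<phi> \<psi>) x = conv (flat \<psi>) (flat \<phi>) x" .
qed

lemma flat_g: "flat g = k"
  by (rule ext) (simp add: flat_def g_st k_def)

lemma flat_k: "flat k = g"
proof (rule ext)
  fix x
  have "flat k x = cnj (g (S (st (S x))))" by (simp add: flat_def k_def)
  also have "\<dots> = k (S x)" by (rule kappa)
  also have "\<dots> = g x" by (rule k_k)
  finally show "flat k x = g x" .
qed

lemma tau_Ad': "tau st S (Ad' x) = Ad' (tau st S x)"
proof (rule eqI_lin)
  fix h assume h: "lin h"
  have t: "\<And>\<chi> y. \<chi> (tau st S y) = cnj (flat \<chi> y)" by (simp add: flat_def tau_def)
  have "h (Ad' (tau st S x)) = conv (conv g h) k (tau st S x)" by (rule Ad'_eq[OF h])
  also have "\<dots> = cnj (flat (conv (conv g h) k) x)" by (rule t)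
  also have "flat (conv (conv g h) k) = conv g (conv (flat h) k)"
    using h by (simp add: flat_conv flat_g flat_k)
  also have "conv g (conv (flat h) k) x = flat h (Ad' x)"
    using h by (simp add: Ad'_eq)
  also have "cnj (flat h (Ad' x)) = h (tau st S (Ad' x))" by (simp add: t)
  finally show "h (tau st S (Ad' x)) = h (Ad' (tau st S x))" by simp
qed

end

context rqg begin

lemma bil_prod_simp[simp]: "lin \<phi> \<Longrightarrow> lin \<psi> \<Longrightarrow> bil (\<lambda>u v. \<phi> u * \<psi> v)"
  by (rule bil_prod)

lemma Ad'_mult: "Ad' (x * y) = Ad' x * Ad' y"
proof (rule eqI_lin)
  fix h assume h: "lin h"
  have 1: "h (Ad' (x * y)) = D x (\<lambda>a b. D y (\<lambda>c d. D a (\<lambda>a1 a2. D c (\<lambda>c1 c2. g a1 * g c1 * h (a2 * c2))) * (k b * k d)))"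
  proof -
    have "h (Ad' (x * y)) = D (x * y) (\<lambda>u v. conv g h u * k v)" by (simp add: Ad'_eq[OF h] conv_def)
    also have "\<dots> = D x (\<lambda>a b. D y (\<lambda>c d. conv g h (a * c) * k (b * d)))" by (rule D_mult) (simp add: h)
    also have "\<dots> = D x (\<lambda>a b. D y (\<lambda>c d. D a (\<lambda>a1 a2. D c (\<lambda>c1 c2. g a1 * g c1 * h (a2 * c2))) * (k b * k d)))"
    proof (intro D_cong)
      fix a b c d
      have "conv g h (a * c) = D a (\<lambda>a1 a2. D c (\<lambda>c1 c2. g (a1 * c1) * h (a2 * c2)))"
        unfolding conv_def by (rule D_mult) (simp add: h)
      then show "conv g h (a * c) * k (b * d) = D a (\<lambda>a1 a2. D c (\<lambda>c1 c2. g a1 * g c1 * h (a2 * c2))) * (k b * k d)"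
        by (simp add: g_mult k_mult)
    qed
    finally show ?thesis .
  qed
  have 2: "h (Ad' x * Ad' y) = D x (\<lambda>a b. D a (\<lambda>a1 a2. g a1 * k b * D y (\<lambda>c d. D c (\<lambda>c1 c2. g c1 * h (a2 * c2)) * k d)))"
  proof -
    have l1: "lin (\<lambda>w. h (w * Ad' y))" using h by (rule lin_multR_arg)
    have "h (Ad' x * Ad' y) = conv (conv g (\<lambda>w. h (w * Ad' y))) k x" by (rule Ad'_eq[OF l1])
    also have "\<dots> = D x (\<lambda>a b. D a (\<lambda>a1 a2. g a1 * h (a2 * Ad' y)) * k b)" by (simp add: conv_def)
    also have "\<dots> = D x (\<lambda>a b. D a (\<lambda>a1 a2. g a1 * k b * D y (\<lambda>c d. D c (\<lambda>c1 c2. g c1 * h (a2 * c2)) * k d)))"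
    proof (intro D_cong)
      fix a b
      have e: "h (a2 * Ad' y) = D y (\<lambda>c d. D c (\<lambda>c1 c2. g c1 * h (a2 * c2)) * k d)" for a2
      proof -
        have l2: "lin (\<lambda>w. h (a2 * w))" using h by (rule lin_multL_arg)
        show ?thesis by (simp add: Ad'_eq[OF l2] conv_def)
      qed
      show "D a (\<lambda>a1 a2. g a1 * h (a2 * Ad' y)) * k b = D a (\<lambda>a1 a2. g a1 * k b * D y (\<lambda>c d. D c (\<lambda>c1 c2. g c1 * h (a2 * c2)) * k d))"
        by (simp add: e D_multc D_cmult mult_ac)
    qed
    finally show ?thesis .
  qed
  have 3: "D x (\<lambda>a b. D y (\<lambda>c d. D a (\<lambda>a1 a2. D c (\<lambda>c1 c2. g a1 * g c1 * h (a2 * c2))) * (k b * k d))) =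
           D x (\<lambda>a b. D a (\<lambda>a1 a2. D y (\<lambda>c d. D c (\<lambda>c1 c2. g a1 * g c1 * h (a2 * c2) * (k b * k d)))))"
  proof (rule D_cong)
    fix a b
    have "D y (\<lambda>c d. D a (\<lambda>a1 a2. D c (\<lambda>c1 c2. g a1 * g c1 * h (a2 * c2))) * (k b * k d)) =
          D y (\<lambda>c d. D a (\<lambda>a1 a2. D c (\<lambda>c1 c2. g a1 * g c1 * h (a2 * c2) * (k b * k d))))"
      by (simp only: D_multc)
    also have "\<dots> = D a (\<lambda>a1 a2. D y (\<lambda>c d. D c (\<lambda>c1 c2. g a1 * g c1 * h (a2 * c2) * (k b * k d))))"
      by (rule D_swap)
    finally show "D y (\<lambda>c d. D a (\<lambda>a1 a2. D c (\<lambda>c1 c2. g a1 * g c1 * h (a2 * c2))) * (k b * k d)) =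
          D a (\<lambda>a1 a2. D y (\<lambda>c d. D c (\<lambda>c1 c2. g a1 * g c1 * h (a2 * c2) * (k b * k d))))" .
  qed
  have 4: "D x (\<lambda>a b. D a (\<lambda>a1 a2. g a1 * k b * D y (\<lambda>c d. D c (\<lambda>c1 c2. g c1 * h (a2 * c2)) * k d))) =
           D x (\<lambda>a b. D a (\<lambda>a1 a2. D y (\<lambda>c d. D c (\<lambda>c1 c2. g a1 * g c1 * h (a2 * c2) * (k b * k d)))))"
    by (intro D_cong) (simp add: D_multc D_cmult mult_ac)
  show "h (Ad' (x * y)) = h (Ad' x * Ad' y)" using 1 2 3 4 by simp
qed

end

context rqg begin

definition R :: "'a \<Rightarrow> 'a" where "R x = (\<Sum>(u,v)\<leftarrow>cop x. sc (g v) u)"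
definition R' :: "'a \<Rightarrow> 'a" where "R' x = (\<Sum>(u,v)\<leftarrow>cop x. sc (k v) u)"

lemma R_eq: "lin h \<Longrightarrow> h (R x) = conv h g x"
  by (simp add: R_def conv_def D_def lin_sum_listD lin_scaleD split_def mult.commute)
lemma R'_eq: "lin h \<Longrightarrow> h (R' x) = conv h k x"
  by (simp add: R'_def conv_def D_def lin_sum_listD lin_scaleD split_def mult.commute)

lemma R'_R: "R' (R x) = x"
proof (rule eqI_lin)
  fix h assume h: "lin h"
  have "h (R' (R x)) = conv (conv h k) g x" using h by (simp add: R'_eq R_eq)
  also have "\<dots> = h x" using h by simp
  finally show "h (R' (R x)) = h x" .
qed

lemma R_R': "R (R' x) = x"
proof (rule eqI_lin)
  fix h assume h: "lin h"
  have "h (R (R' x)) = conv (conv h g) k x" using h by (simp add: R'_eq R_eq)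
  also have "\<dots> = h x" using h by simp
  finally show "h (R (R' x)) = h x" .
qed

lemma linA_R: "linA R"
proof (rule linAI; rule eqI_lin)
  fix h x y assume h: "lin h"
  show "h (R (x + y)) = h (R x + R y)"
    using lin_addD[of "conv h g" x y] h by (simp only: R_eq[OF h] lin_addD[OF h] lin_conv lin_g')
next
  fix h c x assume h: "lin h"
  show "h (R (sc c x)) = h (sc c (R x))"
    using lin_scaleD[of "conv h g" c x] h by (simp only: R_eq[OF h] lin_scaleD[OF h] lin_conv lin_g')
qed

lemma R_one: "R 1 = 1"
  by (rule eqI_lin) (simp add: R_eq conv_one g_one)

lemma R_mult: "R (x * y) = R x * R y"
proof (rule eqI_lin)
  fix h assume h: "lin h"
  have "h (R (x * y)) = D x (\<lambda>a b. D y (\<lambda>c d. h (a * c) * g (b * d)))"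
    by (simp add: R_eq[OF h] conv_def D_mult h)
  also have "\<dots> = D x (\<lambda>a b. D y (\<lambda>c d. h (a * c) * g d) * g b)"
    by (intro D_cong) (simp add: D_multc D_cmult g_mult mult_ac)
  also have "\<dots> = D x (\<lambda>a b. h (a * R y) * g b)"
  proof (intro D_cong)
    fix a b
    have l: "lin (\<lambda>w. h (a * w))" using h by (rule lin_multL_arg)
    show "D y (\<lambda>c d. h (a * c) * g d) * g b = h (a * R y) * g b"
      by (simp add: R_eq[OF l] conv_def)
  qed
  also have "\<dots> = h (R x * R y)"
  proof -
    have l: "lin (\<lambda>w. h (w * R y))" using h by (rule lin_multR_arg)
    show ?thesis by (simp add: R_eq[OF l] conv_def)
  qed
  finally show "h (R (x * y)) = h (R x * R y)" .
qed

lemma conv_R: "lin f \<Longrightarrow> lin f' \<Longrightarrow> conv f f' (R b) = conv f (\<lambda>y. f' (R y)) b"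
proof -
  assume l: "lin f" "lin f'"
  have e: "(\<lambda>y. f' (R y)) = conv f' g" by (rule ext) (rule R_eq[OF l(2)])
  show ?thesis using l by (simp add: R_eq e)
qed

end

lemma teq2_sym: "teq2 s1 s2 l1 l2 \<Longrightarrow> teq2 s1 s2 l2 l1"
  unfolding teq2_def by metis
lemma teq2_trans: "teq2 s1 s2 l1 l2 \<Longrightarrow> teq2 s1 s2 l2 l3 \<Longrightarrow> teq2 s1 s2 l1 l3"
  unfolding teq2_def by metis

locale rqgK = rqg sc st cop eps S g
  for sc :: "complex \<Rightarrow> 'a::ring_1 \<Rightarrow> 'a" and st cop eps S g +
  fixes scK :: "complex \<Rightarrow> 'k::ab_group_add \<Rightarrow> 'k" and copK :: "'k \<Rightarrow> ('k \<times> 'k) list"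
    and epsK :: "'k \<Rightarrow> complex" and act :: "'k \<Rightarrow> 'a \<Rightarrow> 'k" and tauK :: "'k \<Rightarrow> 'k"
    and r :: "'a \<Rightarrow> 'k"
  assumes qs: "real_coisotropic_right_qsubgroup sc st cop eps S scK copK epsK act tauK r"
begin

lemma K_coalg: "coalgebra scK copK epsK" using qs unfolding real_coisotropic_right_qsubgroup_def by simp
lemma act_lin1: "Vector_Spaces.linear scK scK (\<lambda>kk. act kk a)" using qs unfolding real_coisotropic_right_qsubgroup_def by simp
lemma act_lin2: "Vector_Spaces.linear sc scK (act kk)" using qs unfolding real_coisotropic_right_qsubgroup_def by simp
lemma act_one: "act kk 1 = kk" using qs unfolding real_coisotropic_right_qsubgroup_def by simp
lemma act_act: "act (act kk a) b = act kk (a * b)" using qs unfolding real_coisotropic_right_qsubgroup_def by simp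
lemma r_lin: "Vector_Spaces.linear sc scK r" using qs unfolding real_coisotropic_right_qsubgroup_def by simp
lemma r_surj: "surj r" using qs unfolding real_coisotropic_right_qsubgroup_def by simp
lemma r_cop: "teq2 scK scK (copK (r x)) (map (\<lambda>(u,v). (r u, r v)) (cop x))" using qs unfolding real_coisotropic_right_qsubgroup_def by simp
lemma r_eps: "epsK (r x) = eps x" using qs unfolding real_coisotropic_right_qsubgroup_def by simp
lemma r_mult: "r (x * y) = act (r x) y" using qs unfolding real_coisotropic_right_qsubgroup_def by simp
lemma tauK_add: "tauK (kk + l) = tauK kk + tauK l" using qs unfolding real_coisotropic_right_qsubgroup_def by simp
lemma tauK_scale: "tauK (scK c kk) = scK (cnj c) (tauK kk)" using qs unfolding real_coisotropic_right_qsubgroup_def by simp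
lemma tauK_r: "tauK (r x) = r (tau st S x)" using qs unfolding real_coisotropic_right_qsubgroup_def by simp

lemma vsK: "vector_space scK" using r_lin by (rule lin_vs2)
lemma epsK_lin: "lfunc scK epsK" using K_coalg unfolding coalgebra_def by simp
lemma copK_add: "teq2 scK scK (copK (x + y)) (copK x @ copK y)" using K_coalg unfolding coalgebra_def by simp

lemma copK_0: "teq2 scK scK (copK 0) []"
  unfolding teq2_def
proof (intro allI impI)
  fix f h :: "'k \<Rightarrow> complex"
  assume fh: "lfunc scK f \<and> lfunc scK h"
  have "(\<Sum>(a,b)\<leftarrow>copK (0 + 0). f a * h b) = (\<Sum>(a,b)\<leftarrow>copK 0 @ copK 0. f a * h b)"
    using teq2D[OF copK_add] fh by blast
  then show "(\<Sum>(a,b)\<leftarrow>copK 0. f a * h b) = (\<Sum>(a,b)\<leftarrow>[]. f a * h b)" by simp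
qed

lemma r0: "r 0 = 0" by (rule lin_0[OF r_lin])
lemma r_add: "r (x + y) = r x + r y" by (rule lin_add[OF r_lin])
lemma r_scale: "r (sc c x) = scK c (r x)" by (rule lin_scale[OF r_lin])
lemma act0: "act 0 a = 0" using lin_0[OF act_lin1] .
lemma tauK0: "tauK 0 = 0" using tauK_add[of 0 0] by simp
lemma epsK0: "epsK 0 = 0" using lin_0[of scK "(*)" epsK] epsK_lin by (simp add: lfunc_def)

lemma lin_Kr: "lfunc scK \<phi> \<Longrightarrow> lin (\<lambda>y. \<phi> (r y))"
  unfolding lin_def lfunc_def by (rule lincomp0[OF r_lin])

definition rg :: "'a \<Rightarrow> 'k" where "rg x = r (Ad' x)"

lemma rg_inv: "(\<lambda>x. r (inv AdA x)) = rg"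
  by (simp add: inv_Ad rg_def[abs_def])

lemma rg_lin: "Vector_Spaces.linear sc scK rg"
  unfolding rg_def[abs_def] by (rule lincomp0[OF _ r_lin]) (use linA_Ad' in \<open>simp add: linA_def\<close>)

lemma ker_rg: "ker rg = AdA ` ker r"
proof
  show "ker rg \<subseteq> AdA ` ker r"
  proof
    fix x assume "x \<in> ker rg"
    then have "Ad' x \<in> ker r" by (simp add: ker_def rg_def)
    then show "x \<in> AdA ` ker r" using Ad_Ad'[of x] by (metis image_eqI)
  qed
  show "AdA ` ker r \<subseteq> ker rg"
    by (auto simp: ker_def rg_def Ad'_Ad)
qed

lemma tau_ker: "tau st S ` ker rg \<subseteq> ker rg"
proof
  fix z assume "z \<in> tau st S ` ker rg"
  then obtain x where x: "x \<in> ker rg" "z = tau st S x" by blast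
  have "rg z = r (tau st S (Ad' x))" using x by (simp add: rg_def tau_Ad')
  also have "\<dots> = tauK (r (Ad' x))" by (simp add: tauK_r)
  also have "\<dots> = 0" using x by (simp add: ker_def rg_def tauK0)
  finally show "z \<in> ker rg" by (simp add: ker_def)
qed

lemma cspace_ker: assumes l: "Vector_Spaces.linear sc s2 f" shows "cspace sc (ker f)"
proof -
  interpret vector_space s2 by (rule lin_vs2[OF l])
  show ?thesis unfolding cspace_def ker_def using l by (auto simp: lin_0 lin_add lin_scale)
qed

lemma right_ideal_ker: "right_ideal sc (ker rg)"
  unfolding right_ideal_def
proof (intro conjI ballI allI)
  show "cspace sc (ker rg)" by (rule cspace_ker[OF rg_lin])
  fix x y assume "x \<in> ker rg"
  then show "x * y \<in> ker rg" by (simp add: ker_def rg_def Ad'_mult r_mult act0)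
qed

end

lemma sl_aux: "(\<Sum>p\<leftarrow>l. F p * (A p - B p * c)) = (\<Sum>p\<leftarrow>l. F p * A p) - (\<Sum>p\<leftarrow>l. F p * B p) * (c::complex)"
  by (induction l) (auto simp: algebra_simps)

context rqgK begin

lemma lin_lfunc: "lin f = lfunc sc f" by (simp add: lin_def)

lemma conv_sum: "conv f f' x = (\<Sum>(u,v)\<leftarrow>cop x. f u * f' v)"
  by (simp add: conv_def D_def)

lemma coideal_ker: "two_sided_coideal sc cop eps (ker rg)"
  unfolding two_sided_coideal_def
proof (intro conjI ballI)
  show "cspace sc (ker rg)" by (rule cspace_ker[OF rg_lin])
  fix x assume x: "x \<in> ker rg"
  then have ry: "r (Ad' x) = 0" by (simp add: ker_def rg_def)
  show "eps x = 0" using ry eps_Ad'[of x] r_eps[of "Ad' x"] by (simp add: epsK0)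
  let ?y = "Ad' x"
  have z: "teq2 scK scK (map (\<lambda>(u,v). (r u, r v)) (cop ?y)) []"
    using teq2_trans[OF teq2_sym[OF r_cop[of ?y]]] copK_0 ry by simp
  obtain l' where l': "teq2 sc sc (cop ?y) l'" "\<forall>(a,b)\<in>set l'. r a = 0 \<or> r b = 0"
    using teq2_ker2[OF vsA vsK r_lin z] by blast
  let ?l = "map (\<lambda>(u,v). (AdA u, AdA v)) l'"
  have "teq2 sc sc (cop x) ?l"
    unfolding teq2_def
  proof (intro allI impI)
    fix f f' assume ff: "lfunc sc f \<and> lfunc sc f'"
    then have lf: "lin f" "lin f'" by (auto simp: lin_def)
    have lA: "lfunc sc (\<lambda>y. f (AdA y))" "lfunc sc (\<lambda>y. f' (AdA y))"
      using lin_comp[OF lf(1) linA_Ad] lin_comp[OF lf(2) linA_Ad] by (auto simp: lin_def)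
    have "(\<Sum>(u,v)\<leftarrow>cop x. f u * f' v) = conv f f' (AdA ?y)" by (simp add: conv_sum Ad_Ad')
    also have "\<dots> = conv (\<lambda>y. f (AdA y)) (\<lambda>y. f' (AdA y)) ?y" by (rule conv_Ad[OF lf])
    also have "\<dots> = (\<Sum>(u,v)\<leftarrow>l'. f (AdA u) * f' (AdA v))"
      unfolding conv_sum by (rule teq2D[OF l'(1) lA])
    also have "\<dots> = (\<Sum>(u,v)\<leftarrow>?l. f u * f' v)" by (simp add: split_def o_def)
    finally show "(\<Sum>(u,v)\<leftarrow>cop x. f u * f' v) = (\<Sum>(u,v)\<leftarrow>?l. f u * f' v)" .
  qed
  moreover have "\<forall>(u,v)\<in>set ?l. u \<in> ker rg \<or> v \<in> ker rg"
    using l'(2) by (auto simp: ker_def rg_def Ad'_Ad)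
  ultimately show "\<exists>l. teq2 sc sc (cop x) l \<and> (\<forall>(u,v)\<in>set l. u \<in> ker rg \<or> v \<in> ker rg)" by blast
qed

lemma subgroup_rg: "real_coisotropic_right_qsubgroup sc st cop eps S scK copK epsK (\<lambda>kk a. act kk (Ad' a)) tauK rg"
  unfolding real_coisotropic_right_qsubgroup_def
proof (intro conjI allI)
  show "coalgebra scK copK epsK" by (rule K_coalg)
  show "Vector_Spaces.linear scK scK (\<lambda>kk. act kk (Ad' a))" for a by (rule act_lin1)
  show "Vector_Spaces.linear sc scK (\<lambda>a. act kk (Ad' a))" for kk
    by (rule lincomp0[OF _ act_lin2]) (use linA_Ad' in \<open>simp add: linA_def\<close>)
  show "act kk (Ad' 1) = kk" for kk by (simp add: Ad'_one act_one)
  show "act (act kk (Ad' a)) (Ad' b) = act kk (Ad' (a * b))" for kk a b by (simp add: act_act Ad'_mult)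
  show "Vector_Spaces.linear sc scK rg" by (rule rg_lin)
  show "surj rg"
  proof -
    have "z \<in> range rg" for z
    proof -
      obtain w where "z = r w" using r_surj by (metis surjD)
      then have "rg (AdA w) = z" by (simp add: rg_def Ad'_Ad)
      then show ?thesis by (metis rangeI)
    qed
    then show ?thesis by blast
  qed
  show "teq2 scK scK (copK (rg x)) (map (\<lambda>(u,v). (rg u, rg v)) (cop x))" for x
    unfolding teq2_def
  proof (intro allI impI)
    fix \<phi> \<psi> assume ff: "lfunc scK \<phi> \<and> lfunc scK \<psi>"
    have l: "lin (\<lambda>y. \<phi> (r y))" "lin (\<lambda>y. \<psi> (r y))" using ff lin_Kr by auto
    have "(\<Sum>(a,b)\<leftarrow>copK (rg x). \<phi> a * \<psi> b) = (\<Sum>(a,b)\<leftarrow>map (\<lambda>(u,v). (r u, r v)) (cop (Ad' x)). \<phi> a * \<psi> b)"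
      unfolding rg_def using teq2D[OF r_cop] ff by blast
    also have "\<dots> = conv (\<lambda>y. \<phi> (r y)) (\<lambda>y. \<psi> (r y)) (Ad' x)" by (simp add: conv_sum split_def o_def)
    also have "\<dots> = conv (\<lambda>y. \<phi> (r (Ad' y))) (\<lambda>y. \<psi> (r (Ad' y))) x" by (rule conv_Ad'[OF l])
    also have "\<dots> = (\<Sum>(a,b)\<leftarrow>map (\<lambda>(u,v). (rg u, rg v)) (cop x). \<phi> a * \<psi> b)"
      by (simp add: conv_sum split_def o_def rg_def)
    finally show "(\<Sum>(a,b)\<leftarrow>copK (rg x). \<phi> a * \<psi> b) = (\<Sum>(a,b)\<leftarrow>map (\<lambda>(u,v). (rg u, rg v)) (cop x). \<phi> a * \<psi> b)" .
  qed
  show "epsK (rg x) = eps x" for x by (simp add: rg_def r_eps eps_Ad')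
  show "rg (x * y) = act (rg x) (Ad' y)" for x y by (simp add: rg_def Ad'_mult r_mult)
  show "tauK (kk + l) = tauK kk + tauK l" for kk l by (rule tauK_add)
  show "tauK (scK c kk) = scK (cnj c) (tauK kk)" for c kk by (rule tauK_scale)
  show "tauK (rg x) = rg (tau st S x)" for x by (simp add: rg_def tauK_r tau_Ad')
qed

lemma hom_char: "a \<in> hom_space sc cop scK s \<longleftrightarrow>
   (\<forall>f \<phi>. lfunc sc f \<longrightarrow> lfunc scK \<phi> \<longrightarrow> conv f (\<lambda>y. \<phi> (s y)) a = f a * \<phi> (s 1))"
  unfolding hom_space_def teq2_def conv_sum by (simp add: split_def o_def) blast

lemma rg_one: "rg 1 = r 1" by (simp add: rg_def Ad'_one)

lemma hom_rg_iff: "a \<in> hom_space sc cop scK rg \<longleftrightarrow> Ad' a \<in> hom_space sc cop scK r"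
proof
  assume a: "a \<in> hom_space sc cop scK rg"
  show "Ad' a \<in> hom_space sc cop scK r"
    unfolding hom_char
  proof (intro allI impI)
    fix f \<phi> assume f: "lfunc sc f" and p: "lfunc scK \<phi>"
    have lf: "lin f" using f by (simp add: lin_def)
    have lf': "lfunc sc (\<lambda>y. f (Ad' y))" using lin_comp[OF lf linA_Ad'] by (simp add: lin_def)
    have "conv f (\<lambda>y. \<phi> (r y)) (Ad' a) = conv (\<lambda>y. f (Ad' y)) (\<lambda>y. \<phi> (rg y)) a"
      unfolding rg_def by (rule conv_Ad'[OF lf lin_Kr[OF p]])
    also have "\<dots> = f (Ad' a) * \<phi> (rg 1)" using a lf' p unfolding hom_char by blast
    finally show "conv f (\<lambda>y. \<phi> (r y)) (Ad' a) = f (Ad' a) * \<phi> (r 1)" by (simp add: rg_one)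
  qed
next
  assume a: "Ad' a \<in> hom_space sc cop scK r"
  show "a \<in> hom_space sc cop scK rg"
    unfolding hom_char
  proof (intro allI impI)
    fix f \<phi> assume f: "lfunc sc f" and p: "lfunc scK \<phi>"
    have lf: "lin f" using f by (simp add: lin_def)
    have lfA: "lin (\<lambda>y. f (AdA y))" using lin_comp[OF lf linA_Ad] .
    have "conv f (\<lambda>y. \<phi> (rg y)) a = conv (\<lambda>y. f (AdA (Ad' y))) (\<lambda>y. \<phi> (r (Ad' y))) a"
      by (simp add: Ad_Ad' rg_def)
    also have "\<dots> = conv (\<lambda>y. f (AdA y)) (\<lambda>y. \<phi> (r y)) (Ad' a)"
      by (rule conv_Ad'[OF lfA lin_Kr[OF p], symmetric])
    also have "\<dots> = f (AdA (Ad' a)) * \<phi> (r 1)" using a lfA p unfolding hom_char lin_def by blast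
    finally show "conv f (\<lambda>y. \<phi> (rg y)) a = f a * \<phi> (rg 1)" by (simp add: rg_one Ad_Ad')
  qed
qed

lemma hom_rg: "hom_space sc cop scK rg = AdA ` hom_space sc cop scK r"
proof
  show "hom_space sc cop scK rg \<subseteq> AdA ` hom_space sc cop scK r"
  proof
    fix a assume "a \<in> hom_space sc cop scK rg"
    then have "Ad' a \<in> hom_space sc cop scK r" by (simp add: hom_rg_iff)
    then show "a \<in> AdA ` hom_space sc cop scK r" using Ad_Ad'[of a] by (metis image_eqI)
  qed
  show "AdA ` hom_space sc cop scK r \<subseteq> hom_space sc cop scK rg"
    by (auto simp: hom_rg_iff Ad'_Ad)
qed

end

context rqgK begin

lemma R_in: assumes b: "b \<in> hom_space sc cop scK r" shows "R b \<in> hom_space sc cop scK rg"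
  unfolding hom_char
proof (intro allI impI)
  fix f \<phi> assume f: "lfunc sc f" and p: "lfunc scK \<phi>"
  have lf: "lin f" using f by (simp add: lin_def)
  have lp: "lin (\<lambda>y. \<phi> (r y))" by (rule lin_Kr[OF p])
  have e: "(\<lambda>y. \<phi> (rg y)) = conv (conv g (\<lambda>y. \<phi> (r y))) k"
    unfolding rg_def by (rule comp_Ad'[OF lp])
  have lfg: "lfunc sc (conv f g)" using lf by (simp add: lin_def[symmetric])
  have "conv f (\<lambda>y. \<phi> (rg y)) (R b) = conv (conv f (conv (conv g (\<lambda>y. \<phi> (r y))) k)) g b"
    unfolding e by (rule R_eq) (simp add: lf lp)
  also have "\<dots> = conv (conv f g) (\<lambda>y. \<phi> (r y)) b" using lf lp by simp
  also have "\<dots> = conv f g b * \<phi> (r 1)" using b lfg p unfolding hom_char by blast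
  also have "\<dots> = f (R b) * \<phi> (rg 1)" by (simp add: R_eq[OF lf] rg_one)
  finally show "conv f (\<lambda>y. \<phi> (rg y)) (R b) = f (R b) * \<phi> (rg 1)" .
qed

lemma R'_in: assumes a: "a \<in> hom_space sc cop scK rg" shows "R' a \<in> hom_space sc cop scK r"
  unfolding hom_char
proof (intro allI impI)
  fix f \<phi> assume f: "lfunc sc f" and p: "lfunc scK \<phi>"
  have lf: "lin f" using f by (simp add: lin_def)
  have lp: "lin (\<lambda>y. \<phi> (r y))" by (rule lin_Kr[OF p])
  have e: "(\<lambda>y. \<phi> (rg y)) = conv (conv g (\<lambda>y. \<phi> (r y))) k"
    unfolding rg_def by (rule comp_Ad'[OF lp])
  have lfk: "lfunc sc (conv f k)" using lf by (simp add: lin_def[symmetric])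
  have "conv f (\<lambda>y. \<phi> (r y)) (R' a) = conv (conv f (\<lambda>y. \<phi> (r y))) k a"
    by (rule R'_eq) (simp add: lf lp)
  also have "\<dots> = conv (conv f k) (conv (conv g (\<lambda>y. \<phi> (r y))) k) a" using lf lp by simp
  also have "\<dots> = conv (conv f k) (\<lambda>y. \<phi> (rg y)) a" by (simp add: e)
  also have "\<dots> = conv f k a * \<phi> (rg 1)" using a lfk p unfolding hom_char by blast
  also have "\<dots> = f (R' a) * \<phi> (r 1)" by (simp add: R'_eq[OF lf] rg_one)
  finally show "conv f (\<lambda>y. \<phi> (r y)) (R' a) = f (R' a) * \<phi> (r 1)" .
qed

lemma comod_R: assumes b: "b \<in> hom_space sc cop scK r"
  shows "\<exists>l. teq2 sc sc (cop b) l \<and> (\<forall>(u,v)\<in>set l. v \<in> hom_space sc cop scK r) \<and>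
              teq2 sc sc (cop (R b)) (map (\<lambda>(u,v). (u, R v)) l)"
proof -
  define Ts where "Ts = {\<tau>. \<exists>f \<phi>. lfunc sc f \<and> lfunc scK \<phi> \<and>
      \<tau> = (\<lambda>y. conv f (\<lambda>z. \<phi> (r z)) y - f y * \<phi> (r 1))}"
  have Ts: "lfunc sc \<tau>" if tt: "\<tau> \<in> Ts" for \<tau>
  proof -
    obtain f \<phi> where fp: "lfunc sc f" "lfunc scK \<phi>" "\<tau> = (\<lambda>y. conv f (\<lambda>z. \<phi> (r z)) y - f y * \<phi> (r 1))"
      using tt unfolding Ts_def by blast
    have "lin \<tau>" unfolding fp(3)
      by (intro lin_minus lin_multc lin_conv lin_Kr[OF fp(2)]) (use fp(1) in \<open>simp_all add: lin_def\<close>)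
    then show ?thesis by (simp add: lin_def)
  qed
  have z: "(\<Sum>(a,c)\<leftarrow>cop b. f0 a * \<tau> c) = 0" if f0: "lfunc sc f0" and t: "\<tau> \<in> Ts" for f0 \<tau>
  proof -
    obtain f \<phi> where fp: "lfunc sc f" "lfunc scK \<phi>" "\<tau> = (\<lambda>y. conv f (\<lambda>z. \<phi> (r z)) y - f y * \<phi> (r 1))"
      using t unfolding Ts_def by blast
    have l: "lin f0" "lin f" "lin (\<lambda>z. \<phi> (r z))" using f0 fp lin_Kr by (auto simp: lin_def)
    have lff: "lfunc sc (conv f0 f)" using l by (simp add: lin_def[symmetric])
    have "(\<Sum>(a,c)\<leftarrow>cop b. f0 a * \<tau> c) = conv f0 (conv f (\<lambda>z. \<phi> (r z))) b - conv f0 f b * \<phi> (r 1)"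
      unfolding fp(3) conv_sum split_def by (rule sl_aux)
    also have "conv f0 (conv f (\<lambda>z. \<phi> (r z))) b = conv (conv f0 f) (\<lambda>z. \<phi> (r z)) b" using l by simp
    also have "\<dots> = conv f0 f b * \<phi> (r 1)" using b lff fp(2) unfolding hom_char by blast
    finally show ?thesis by simp
  qed
  obtain l where l: "teq2 sc sc (cop b) l" "\<forall>(a,c)\<in>set l. \<forall>\<tau>\<in>Ts. \<tau> c = 0"
    using teq2_ker1[OF vsA vsA z Ts] by blast
  have inB: "\<forall>(u,v)\<in>set l. v \<in> hom_space sc cop scK r"
  proof (clarify)
    fix u v assume uv: "(u,v) \<in> set l"
    show "v \<in> hom_space sc cop scK r" unfolding hom_char
    proof (intro allI impI)
      fix f \<phi> assume "lfunc sc f" "lfunc scK \<phi>"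
      then have "(\<lambda>y. conv f (\<lambda>z. \<phi> (r z)) y - f y * \<phi> (r 1)) \<in> Ts" unfolding Ts_def by blast
      then have "conv f (\<lambda>z. \<phi> (r z)) v - f v * \<phi> (r 1) = 0" using l(2) uv by fastforce
      then show "conv f (\<lambda>z. \<phi> (r z)) v = f v * \<phi> (r 1)" by simp
    qed
  qed
  have "teq2 sc sc (cop (R b)) (map (\<lambda>(u,v). (u, R v)) l)"
    unfolding teq2_def
  proof (intro allI impI)
    fix f f' assume ff: "lfunc sc f \<and> lfunc sc f'"
    then have lf: "lin f" "lin f'" by (auto simp: lin_def)
    have lR: "lfunc sc (\<lambda>y. f' (R y))" using lin_comp[OF lf(2) linA_R] by (simp add: lin_def)
    have "(\<Sum>(u,v)\<leftarrow>cop (R b). f u * f' v) = conv f f' (R b)" by (simp add: conv_sum)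
    also have "\<dots> = conv f (\<lambda>y. f' (R y)) b" by (rule conv_R[OF lf])
    also have "\<dots> = (\<Sum>(u,v)\<leftarrow>l. f u * f' (R v))" unfolding conv_sum
      by (rule teq2D[OF l(1)]) (use ff lR in auto)
    also have "\<dots> = (\<Sum>(u,v)\<leftarrow>map (\<lambda>(u,v). (u, R v)) l. f u * f' v)" by (simp add: split_def o_def)
    finally show "(\<Sum>(u,v)\<leftarrow>cop (R b). f u * f' v) = (\<Sum>(u,v)\<leftarrow>map (\<lambda>(u,v). (u, R v)) l. f u * f' v)" .
  qed
  then show ?thesis using l(1) inB by blast
qed

lemma comod_iso: "left_comod_alg_iso sc cop (hom_space sc cop scK r) (hom_space sc cop scK rg) R"
  unfolding left_comod_alg_iso_def
proof (intro conjI ballI allI)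
  show "bij_betw R (hom_space sc cop scK r) (hom_space sc cop scK rg)"
    by (rule bij_betw_byWitness[where f' = R']) (auto simp: R'_R R_R' R_in R'_in)
  show "R (x + y) = R x + R y" for x y by (rule linA_add[OF linA_R])
  show "R (x * y) = R x * R y" for x y by (rule R_mult)
  show "R (sc c x) = sc c (R x)" for c x by (rule linA_scale[OF linA_R])
  show "R 1 = 1" by (rule R_one)
  show "\<exists>l. teq2 sc sc (cop b) l \<and> (\<forall>(u,v)\<in>set l. v \<in> hom_space sc cop scK r) \<and>
              teq2 sc sc (cop (R b)) (map (\<lambda>(u,v). (u, R v)) l)" if "b \<in> hom_space sc cop scK r" for b
    by (rule comod_R[OF that])
qed

end

theorem proposition3:
  fixes sc :: "complex \<Rightarrow> 'a::ring_1 \<Rightarrow> 'a" and st :: "'a \<Rightarrow> 'a"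
    and cop :: "'a \<Rightarrow> ('a \<times> 'a) list" and eps :: "'a \<Rightarrow> complex" and S :: "'a \<Rightarrow> 'a"
    and g :: "'a \<Rightarrow> complex"
    and scK :: "complex \<Rightarrow> 'k::ab_group_add \<Rightarrow> 'k" and copK :: "'k \<Rightarrow> ('k \<times> 'k) list"
    and epsK :: "'k \<Rightarrow> complex" and act :: "'k \<Rightarrow> 'a \<Rightarrow> 'k" and tauK :: "'k \<Rightarrow> 'k"
    and r :: "'a \<Rightarrow> 'k"
  defines "rg \<equiv> (\<lambda>x. r (inv (Ad sc cop S g) x))"
  assumes "real_quantum_group sc st cop eps S"
    and "character sc st g"
    and "real_coisotropic_right_qsubgroup sc st cop eps S scK copK epsK act tauK r"
  shows "ker rg = Ad sc cop S g ` ker r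
    \<and> tau st S ` ker rg \<subseteq> ker rg
    \<and> right_ideal sc (ker rg)
    \<and> two_sided_coideal sc cop eps (ker rg)
    \<and> (\<exists>copK' epsK' act' tauK'.
          real_coisotropic_right_qsubgroup sc st cop eps S scK copK' epsK' act' tauK' rg)
    \<and> hom_space sc cop scK rg = Ad sc cop S g ` hom_space sc cop scK r
    \<and> (\<exists>phi. left_comod_alg_iso sc cop (hom_space sc cop scK r) (hom_space sc cop scK rg) phi)"
proof -
  note rgdef = rg_def
  interpret rqgK sc st cop eps S g scK copK epsK act tauK r
    using assms(2,3,4) by (simp add: rqgK_def rqg_def rqgK_axioms_def)
  have e: "rg = rqgK.rg sc cop S g r" unfolding rgdef using rg_inv by simp
  show ?thesis unfolding e
    using ker_rg tau_ker right_ideal_ker coideal_ker subgroup_rg hom_rg comod_iso by blast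
qed

end
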